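(* Consider the D-EX$(\zeta_n)$ model described in the context with $\lim_{n\to\infty}\zeta_n=1$, and let $z\in\mathcal Z$ be such that $F_\infty(t\mid z)<t/\alpha$ for all $t\in(0,\alpha]$. Setting $\gamma(z)=\lim_{t\to 0^+}F_\infty(t\mid z)/t$, it holds that \[ \operatorname{EER}_\infty(1\mid z)=0,\qquad \operatorname{FDR}_\infty(1\mid z)=\alpha\gamma(z). \]
   Context: Setting (D-EX$(\zeta_n)$ model). Fix $\alpha\in(0,1)$. Let $\mathcal X,\mathcal Z,\mathcal T\subseteq\mathbb R$ be intervals. Let $Z$ be a real random variable with values in $\mathcal Z$ and continuous c.d.f. $W_Z$, and, for each $n$, let $X_1,\dots,X_n$ be independent real random variables with values in $\mathcal X$, independent of $Z$. Let $g:\mathcal X\times\mathcal Z\to\mathcal T$ be continuous, strictly increasing in its first argument and either strictly monotone or constant in its second; let $g_1$ be its inverse in the first argument ($g(x,z)=w$ iff $x=g_1(w,z)$). Test statistics $T_i=g(X_i,Z)$ test $H_i:\vartheta_i=0$ vs $K_i:\vartheta_i>0$. Under $H_i$, $X_i$ has continuous c.d.f. $W_X$ and $T_i$ has c.d.f. $W_T$. Given $Z=z$, $p_i(z)=1-W_T(g(X_i,z))$. $F_\infty(t\mid z)=1-W_X\big(g_1(W_T^{-1}(1-t),z)\big)$ for $t\in(0,1)$, assumed continuous on $[0,1]$, with $F_\infty(0\mid z)=0$ and right-differentiable at $0$ for all $z$. In the D-EX$(\zeta_n)$ model, for each $n$ exactly $n_0$ of $n$ hypotheses are true, $\zeta_n=n_0/n$,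 and every false hypothesis has $\vartheta_i=\infty$ and $p$-value $0$ almost surely. LSU at level $\alpha$: with $m=\max\{i:p_{i:n}\le i\alpha/n\}$, reject all $H_i$ with $p_i\le m\alpha/n$. $V_n(z)$ = number of rejected true hypotheses and $R_n(z)$ = number of rejections, given $Z=z$. $\operatorname{EER}_\infty(1\mid z)=\lim_{n\to\infty}\mathbb E[V_n/n\mid Z=z]$ and $\operatorname{FDR}_\infty(1\mid z)=\lim_{n\to\infty}\mathbb E[V_n/(R_n\vee1)\mid Z=z]$. *)

theory Defs
  imports "HOL-Probability.Probability"
begin

definition pval :: "(real \<Rightarrow> real) \<Rightarrow> (real \<Rightarrow> real \<Rightarrow> real) \<Rightarrow> real \<Rightarrow> real \<Rightarrow> real" where
  "pval WT g z x = 1 - WT (g x z)"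

definition Finf :: "real measure \<Rightarrow> (real \<Rightarrow> real) \<Rightarrow> (real \<Rightarrow> real \<Rightarrow> real) \<Rightarrow> real \<Rightarrow> real \<Rightarrow> real" where
  "Finf MX WT g z t = measure MX {x \<in> space MX. pval WT g z x \<le> t}"

definition lsu_m :: "real \<Rightarrow> nat \<Rightarrow> (nat \<Rightarrow> real) \<Rightarrow> nat" where
  "lsu_m \<alpha> n p = Max ({0} \<union> {i \<in> {1..n}. sort (map p [0..<n]) ! (i - 1) \<le> real i * \<alpha> / real n})"

definition lsu_rej :: "real \<Rightarrow> nat \<Rightarrow> (nat \<Rightarrow> real) \<Rightarrow> nat set" where
  "lsu_rej \<alpha> n p = (if lsu_m \<alpha> n p = 0 then {}
      else {i \<in> {..<n}. p i \<le> real (lsu_m \<alpha> n p) * \<alpha> / real n})"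

text \<open>D-EX(zeta_n) model given Z = z: hypotheses 0..<n0 are true (p-value pval of X_i),
  hypotheses n0..<n are false with p-value 0.\<close>
definition dex_pvals :: "(real \<Rightarrow> real) \<Rightarrow> (real \<Rightarrow> real \<Rightarrow> real) \<Rightarrow> real \<Rightarrow> nat \<Rightarrow> (nat \<Rightarrow> real) \<Rightarrow> nat \<Rightarrow> real" where
  "dex_pvals WT g z n0 x i = (if i < n0 then pval WT g z (x i) else 0)"

definition V_n :: "real \<Rightarrow> (real \<Rightarrow> real) \<Rightarrow> (real \<Rightarrow> real \<Rightarrow> real) \<Rightarrow> real \<Rightarrow> nat \<Rightarrow> nat \<Rightarrow> (nat \<Rightarrow> real) \<Rightarrow> nat" where
  "V_n \<alpha> WT g z n n0 x = card {i \<in> lsu_rej \<alpha> n (dex_pvals WT g z n0 x). i < n0}"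

definition R_n :: "real \<Rightarrow> (real \<Rightarrow> real) \<Rightarrow> (real \<Rightarrow> real \<Rightarrow> real) \<Rightarrow> real \<Rightarrow> nat \<Rightarrow> nat \<Rightarrow> (nat \<Rightarrow> real) \<Rightarrow> nat" where
  "R_n \<alpha> WT g z n n0 x = card (lsu_rej \<alpha> n (dex_pvals WT g z n0 x))"

text \<open>E[V_n / n | Z = z] and E[V_n / (R_n \<or> 1) | Z = z]; by independence of Z and the X_i,
  conditioning on Z = z amounts to plugging in z, with X_0, ..., X_(n-1) i.i.d. ~ MX.\<close>
definition EER_n :: "real measure \<Rightarrow> real \<Rightarrow> (real \<Rightarrow> real) \<Rightarrow> (real \<Rightarrow> real \<Rightarrow> real) \<Rightarrow> real \<Rightarrow> nat \<Rightarrow> nat \<Rightarrow> real" where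
  "EER_n MX \<alpha> WT g z n n0 =
     (\<integral>x. real (V_n \<alpha> WT g z n n0 x) / real n \<partial>(PiM {..<n} (\<lambda>_. MX)))"

definition FDR_n :: "real measure \<Rightarrow> real \<Rightarrow> (real \<Rightarrow> real) \<Rightarrow> (real \<Rightarrow> real \<Rightarrow> real) \<Rightarrow> real \<Rightarrow> nat \<Rightarrow> nat \<Rightarrow> real" where
  "FDR_n MX \<alpha> WT g z n n0 =
     (\<integral>x. real (V_n \<alpha> WT g z n n0 x) / real (max (R_n \<alpha> WT g z n n0 x) 1) \<partial>(PiM {..<n} (\<lambda>_. MX)))"

end

theory Submission
  imports Defs
begin


definition cnt :: "nat \<Rightarrow> (nat \<Rightarrow> real) \<Rightarrow> real \<Rightarrow> nat" where
  "cnt n p c = card {l \<in> {..<n}. p l \<le> c}"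

lemma sorted_nth_le_iff:
  fixes xs :: "real list"
  shows "sorted xs \<Longrightarrow> j < length xs \<Longrightarrow> (xs ! j \<le> c) = (j < length (filter (\<lambda>v. v \<le> c) xs))"
proof (induction xs arbitrary: j)
  case Nil then show ?case by simp
next
  case (Cons a xs)
  show ?case
  proof (cases "a \<le> c")
    case True
    then show ?thesis using Cons by (cases j) auto
  next
    case False
    have "\<forall>v\<in>set xs. \<not> v \<le> c" using Cons.prems(1) False by auto
    then have "filter (\<lambda>v. v \<le> c) xs = []" by (simp add: filter_empty_conv)
    moreover have "(a # xs) ! j \<ge> a" using Cons.prems
      by (cases j) (auto simp: nth_mem)
    ultimately show ?thesis using False by auto
  qed
qed

lemma sort_nth_le_cnt:
  assumes "1 \<le> i" "i \<le> n"
  shows "(sort (map p [0..<n]) ! (i - 1) \<le> c) = (i \<le> cnt n p c)"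
proof -
  let ?xs = "sort (map p [0..<n])"
  have "length (filter (\<lambda>v. v \<le> c) ?xs) = length (filter (\<lambda>v. v \<le> c) (map p [0..<n]))"
    by (metis mset_filter mset_sort size_mset)
  also have "\<dots> = card {i. i < n \<and> map p [0..<n] ! i \<le> c}"
    by (simp add: length_filter_conv_card)
  also have "\<dots> = card {l. l < n \<and> p l \<le> c}"
    by (rule arg_cong[where f=card]) auto
  also have "\<dots> = cnt n p c" unfolding cnt_def by (rule arg_cong[where f=card]) auto
  finally have e: "length (filter (\<lambda>v. v \<le> c) ?xs) = cnt n p c" .
  have "(?xs ! (i - 1) \<le> c) = (i - 1 < length (filter (\<lambda>v. v \<le> c) ?xs))"
    by (rule sorted_nth_le_iff) (use assms in auto)
  then show ?thesis using e assms by auto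
qed

definition Sset :: "real \<Rightarrow> nat \<Rightarrow> (nat \<Rightarrow> real) \<Rightarrow> nat set" where
  "Sset \<alpha> n p = {i \<in> {1..n}. i \<le> cnt n p (real i * \<alpha> / real n)}"

lemma lsu_m_alt: "lsu_m \<alpha> n p = Max ({0} \<union> Sset \<alpha> n p)"
proof -
  have "{i \<in> {1..n}. sort (map p [0..<n]) ! (i - 1) \<le> real i * \<alpha> / real n} = Sset \<alpha> n p"
    unfolding Sset_def using sort_nth_le_cnt by auto
  then show ?thesis unfolding lsu_m_def by simp
qed

lemma finite_Sset: "finite (Sset \<alpha> n p)" unfolding Sset_def by auto

lemma lsu_m_mem: "lsu_m \<alpha> n p \<in> {0} \<union> Sset \<alpha> n p"
  unfolding lsu_m_alt by (rule Max_in) (auto simp: finite_Sset)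

lemma lsu_m_ge: "i \<in> Sset \<alpha> n p \<Longrightarrow> i \<le> lsu_m \<alpha> n p"
  unfolding lsu_m_alt by (rule Max_ge) (auto simp: finite_Sset)

lemma lsu_m_le_n: "lsu_m \<alpha> n p \<le> n"
  using lsu_m_mem[of \<alpha> n p] unfolding Sset_def by auto

lemma cnt_le_n: "cnt n p c \<le> n"
proof -
  have "cnt n p c \<le> card {..<n}" unfolding cnt_def by (rule card_mono) auto
  then show ?thesis by simp
qed

lemma cnt_mono: "c \<le> c' \<Longrightarrow> cnt n p c \<le> cnt n p c'"
  unfolding cnt_def by (rule card_mono) auto

lemma lsu_m_pos_mem:
  assumes "lsu_m \<alpha> n p > 0"
  shows "lsu_m \<alpha> n p \<in> Sset \<alpha> n p"
  using lsu_m_mem[of \<alpha> n p] assms by auto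

lemma lsu_card_rej:
  assumes a: "\<alpha> > 0" and m: "lsu_m \<alpha> n p > 0"
  shows "card (lsu_rej \<alpha> n p) = lsu_m \<alpha> n p"
proof -
  let ?m = "lsu_m \<alpha> n p"
  have rej: "lsu_rej \<alpha> n p = {i \<in> {..<n}. p i \<le> real ?m * \<alpha> / real n}"
    unfolding lsu_rej_def using m by simp
  have c: "card (lsu_rej \<alpha> n p) = cnt n p (real ?m * \<alpha> / real n)"
    unfolding rej cnt_def ..
  have mS: "?m \<in> Sset \<alpha> n p" using lsu_m_pos_mem[OF m] .
  then have ge: "?m \<le> cnt n p (real ?m * \<alpha> / real n)" unfolding Sset_def by auto
  have le: "cnt n p (real ?m * \<alpha> / real n) \<le> ?m"
  proof (rule ccontr)
    assume "\<not> ?thesis"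
    then have h: "?m + 1 \<le> cnt n p (real ?m * \<alpha> / real n)" by simp
    have "?m + 1 \<le> n" using h cnt_le_n[of n p] le_trans by blast
    moreover have "cnt n p (real ?m * \<alpha> / real n) \<le> cnt n p (real (?m+1) * \<alpha> / real n)"
      by (rule cnt_mono) (use a in \<open>auto simp: divide_right_mono mult_right_mono\<close>)
    ultimately have "?m + 1 \<in> Sset \<alpha> n p" using h unfolding Sset_def by auto
    then show False using lsu_m_ge by fastforce
  qed
  show ?thesis using c ge le by simp
qed


lemma cnt_upd_ge:
  assumes "p j \<ge> 0" "c \<ge> 0"
  shows "cnt n p c \<le> cnt n (p(j:=0)) c"
  unfolding cnt_def by (rule card_mono) (use assms in auto)

lemma cnt_upd_eq:
  assumes "p j \<le> c" "c \<ge> 0"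
  shows "cnt n (p(j:=0)) c = cnt n p c"
  unfolding cnt_def by (rule arg_cong[where f=card]) (use assms in auto)

lemma loo:
  assumes a: "\<alpha> > 0" and j: "j < n" and pj: "p j \<ge> 0"
  shows "lsu_m \<alpha> n p \<le> lsu_m \<alpha> n (p(j:=0))"
    and "0 < lsu_m \<alpha> n (p(j:=0))"
    and "p j \<le> real (lsu_m \<alpha> n (p(j:=0))) * \<alpha> / real n \<Longrightarrow> lsu_m \<alpha> n p = lsu_m \<alpha> n (p(j:=0))"
proof -
  let ?m = "lsu_m \<alpha> n p" and ?m' = "lsu_m \<alpha> n (p(j:=0))"
  show le: "?m \<le> ?m'"
  proof (cases "?m = 0")
    case False
    then have mS: "?m \<in> Sset \<alpha> n p" using lsu_m_pos_mem by auto
    have "cnt n p (real ?m * \<alpha> / real n) \<le> cnt n (p(j:=0)) (real ?m * \<alpha> / real n)"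
      by (rule cnt_upd_ge) (use pj a in auto)
    then have "?m \<in> Sset \<alpha> n (p(j:=0))" using mS unfolding Sset_def by auto
    then show ?thesis by (rule lsu_m_ge)
  qed simp
  have "1 \<le> cnt n (p(j:=0)) (real 1 * \<alpha> / real n)"
  proof -
    have "j \<in> {l \<in> {..<n}. (p(j:=0)) l \<le> real 1 * \<alpha> / real n}" using j a by auto
    then have "{l \<in> {..<n}. (p(j:=0)) l \<le> real 1 * \<alpha> / real n} \<noteq> {}" by blast
    then show ?thesis unfolding cnt_def
      by (simp add: Suc_le_eq card_gt_0_iff)
  qed
  then have "1 \<in> Sset \<alpha> n (p(j:=0))" unfolding Sset_def using j by auto
  then have "1 \<le> ?m'" by (rule lsu_m_ge)
  then show pos: "0 < ?m'" by simp
  assume h: "p j \<le> real ?m' * \<alpha> / real n"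
  have mS': "?m' \<in> Sset \<alpha> n (p(j:=0))" using lsu_m_pos_mem pos by auto
  have "cnt n (p(j:=0)) (real ?m' * \<alpha> / real n) = cnt n p (real ?m' * \<alpha> / real n)"
    by (rule cnt_upd_eq) (use h a in auto)
  then have "?m' \<in> Sset \<alpha> n p" using mS' unfolding Sset_def by auto
  then have "?m' \<le> ?m" by (rule lsu_m_ge)
  then show "?m = ?m'" using le by simp
qed

lemma rej_iff:
  assumes a: "\<alpha> > 0" and j: "j < n" and pj: "p j \<ge> 0"
  shows "(j \<in> lsu_rej \<alpha> n p) = (p j \<le> real (lsu_m \<alpha> n (p(j:=0))) * \<alpha> / real n)"
proof -
  let ?m = "lsu_m \<alpha> n p" and ?m' = "lsu_m \<alpha> n (p(j:=0))"
  have "(j \<in> lsu_rej \<alpha> n p) = (?m \<noteq> 0 \<and> p j \<le> real ?m * \<alpha> / real n)"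
    unfolding lsu_rej_def using j by auto
  also have "\<dots> = (p j \<le> real ?m' * \<alpha> / real n)"
  proof
    assume h: "?m \<noteq> 0 \<and> p j \<le> real ?m * \<alpha> / real n"
    have "real ?m * \<alpha> / real n \<le> real ?m' * \<alpha> / real n"
      using loo(1)[where \<alpha>=\<alpha> and j=j and n=n and p=p, OF a j pj] a by (auto intro!: divide_right_mono mult_right_mono)
    then show "p j \<le> real ?m' * \<alpha> / real n" using h by linarith
  next
    assume h: "p j \<le> real ?m' * \<alpha> / real n"
    then show "?m \<noteq> 0 \<and> p j \<le> real ?m * \<alpha> / real n"
      using loo(2,3)[where \<alpha>=\<alpha> and j=j and n=n and p=p, OF a j pj] by auto
  qed
  finally show ?thesis .
qed

lemma fdp_formula:
  assumes a: "\<alpha> > 0" and n0: "n0 \<le> n" and pnn: "\<forall>j<n0. p j \<ge> 0"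
  shows "real (card {i \<in> lsu_rej \<alpha> n p. i < n0}) / real (max (card (lsu_rej \<alpha> n p)) 1)
      = (\<Sum>j<n0. if p j \<le> real (lsu_m \<alpha> n (p(j:=0))) * \<alpha> / real n
                 then 1 / real (lsu_m \<alpha> n (p(j:=0))) else 0)"
proof -
  let ?m = "lsu_m \<alpha> n p"
  let ?M = "\<lambda>j. lsu_m \<alpha> n (p(j:=0))"
  have rej: "\<And>j. j < n0 \<Longrightarrow> (j \<in> lsu_rej \<alpha> n p) = (p j \<le> real (?M j) * \<alpha> / real n)"
    using rej_iff[OF a] n0 pnn by auto
  have cardV: "card {i \<in> lsu_rej \<alpha> n p. i < n0} = card {j \<in> {..<n0}. j \<in> lsu_rej \<alpha> n p}"
    by (rule arg_cong[where f=card]) auto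
  have cs: "real (card {j \<in> {..<n0}. j \<in> lsu_rej \<alpha> n p}) = (\<Sum>j<n0. if j \<in> lsu_rej \<alpha> n p then 1 else 0)"
  proof -
    have e: "{j \<in> {..<n0}. j \<in> lsu_rej \<alpha> n p} = {..<n0} \<inter> lsu_rej \<alpha> n p" by auto
    show ?thesis by (simp only: e) (simp add: sum.If_cases)
  qed
  show ?thesis
  proof (cases "?m = 0")
    case True
    have "lsu_rej \<alpha> n p = {}" unfolding lsu_rej_def using True by simp
    moreover have "\<And>j. j < n0 \<Longrightarrow> \<not> p j \<le> real (?M j) * \<alpha> / real n"
      using rej True unfolding lsu_rej_def by auto
    ultimately show ?thesis by simp
  next
    case False
    then have R: "card (lsu_rej \<alpha> n p) = ?m" using lsu_card_rej a by auto
    have eq: "\<And>j. j < n0 \<Longrightarrow> (if p j \<le> real (?M j) * \<alpha> / real n then 1 / real (?M j) else 0)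
          = (if j \<in> lsu_rej \<alpha> n p then 1 / real ?m else 0)"
    proof -
      fix j assume j: "j < n0"
      show "?thesis j"
      proof (cases "p j \<le> real (?M j) * \<alpha> / real n")
        case True
        then have "?m = ?M j" using loo(3)[OF a, of j n p] j n0 pnn by auto
        then show ?thesis using True rej j by auto
      qed (use rej j in auto)
    qed
    have "real (card {i \<in> lsu_rej \<alpha> n p. i < n0}) / real (max (card (lsu_rej \<alpha> n p)) 1)
        = (\<Sum>j<n0. if j \<in> lsu_rej \<alpha> n p then 1 else 0) / real ?m"
      using cardV cs R False by (simp add: max_def)
    also have "\<dots> = (\<Sum>j<n0. if j \<in> lsu_rej \<alpha> n p then 1 / real ?m else 0)"
      by (simp add: sum_divide_distrib) (intro sum.cong, auto)
    also have "\<dots> = (\<Sum>j<n0. if p j \<le> real (?M j) * \<alpha> / real n then 1 / real (?M j) else 0)"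
      using eq by (intro sum.cong) auto
    finally show ?thesis .
  qed
qed

lemma vn_formula:
  assumes a: "\<alpha> > 0" and n0: "n0 \<le> n" and pnn: "\<forall>j<n0. p j \<ge> 0"
  shows "real (card {i \<in> lsu_rej \<alpha> n p. i < n0}) / real n
      = (\<Sum>j<n0. if p j \<le> real (lsu_m \<alpha> n (p(j:=0))) * \<alpha> / real n then 1 / real n else 0)"
proof -
  have cardV: "card {i \<in> lsu_rej \<alpha> n p. i < n0} = card {j \<in> {..<n0}. j \<in> lsu_rej \<alpha> n p}"
    by (rule arg_cong[where f=card]) auto
  have cs: "real (card {j \<in> {..<n0}. j \<in> lsu_rej \<alpha> n p}) = (\<Sum>j<n0. if j \<in> lsu_rej \<alpha> n p then 1 else 0)"
  proof -
    have e: "{j \<in> {..<n0}. j \<in> lsu_rej \<alpha> n p} = {..<n0} \<inter> lsu_rej \<alpha> n p" by auto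
    show ?thesis by (simp only: e) (simp add: sum.If_cases)
  qed
  show ?thesis
    unfolding cardV cs sum_divide_distrib
    using rej_iff[OF a] n0 pnn by (intro sum.cong) auto
qed


definition dexq :: "(real \<Rightarrow> real) \<Rightarrow> nat \<Rightarrow> (nat \<Rightarrow> real) \<Rightarrow> nat \<Rightarrow> real" where
  "dexq q n0 x i = (if i < n0 then q (x i) else 0)"

lemma measurable_cnt[measurable]:
  assumes "\<And>l. l < n \<Longrightarrow> (\<lambda>x. P x l) \<in> borel_measurable M"
  shows "(\<lambda>x. cnt n (P x) c) \<in> measurable M (count_space UNIV)"
proof -
  have "\<And>l. {x \<in> space M. l \<in> {l \<in> {..<n}. P x l \<le> c}} \<in> sets M"
  proof -
    fix l show "{x \<in> space M. l \<in> {l \<in> {..<n}. P x l \<le> c}} \<in> sets M"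
    proof (cases "l < n")
      case True
      have [measurable]: "(\<lambda>x. P x l) \<in> borel_measurable M" using assms True .
      show ?thesis using True by simp
    qed simp
  qed
  then show ?thesis unfolding cnt_def by (rule measurable_card)
qed

lemma measurable_lsu_m:
  assumes "\<And>l. l < n \<Longrightarrow> (\<lambda>x. P x l) \<in> borel_measurable M"
  shows "(\<lambda>x. lsu_m \<alpha> n (P x)) \<in> measurable M (count_space UNIV)"
proof -
  have e: "lsu_m \<alpha> n (P x) = Max {i. i = 0 \<or> (1 \<le> i \<and> i \<le> n \<and> i \<le> cnt n (P x) (real i * \<alpha> / real n))}" for x
    unfolding lsu_m_alt Sset_def by (rule arg_cong[where f=Max]) auto
  have [measurable]: "\<And>c. (\<lambda>x. cnt n (P x) c) \<in> measurable M (count_space UNIV)"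
    using assms by (rule measurable_cnt)
  show ?thesis unfolding e by measurable
qed

locale setting =
  fixes MX :: "real measure" and q :: "real \<Rightarrow> real"
  assumes MX_prob: "prob_space MX" and q_meas[measurable]: "q \<in> borel_measurable MX"
    and q_nn: "\<And>x. q x \<ge> 0"
begin

definition F where "F t = measure MX {v \<in> space MX. q v \<le> t}"

lemma F_mono: "mono F"
proof (rule monoI)
  fix s t :: real assume "s \<le> t"
  interpret prob_space MX by (rule MX_prob)
  show "F s \<le> F t" unfolding F_def
    by (rule finite_measure_mono) (use \<open>s \<le> t\<close> in auto)
qed

lemma F_meas[measurable]: "F \<in> borel_measurable borel"
  by (rule borel_measurable_mono[OF F_mono])

lemma F_nn: "F t \<ge> 0" unfolding F_def by simp

lemma F_le1: "F t \<le> 1"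
proof -
  interpret prob_space MX by (rule MX_prob)
  show ?thesis unfolding F_def by simp
qed

lemma prob_Pi: "prob_space (PiM I (\<lambda>_. MX))"
proof -
  interpret product_prob_space "\<lambda>_. MX"
    by (simp add: MX_prob product_prob_space_def prob_space_imp_sigma_finite product_prob_space_axioms_def product_sigma_finite_def)
  show ?thesis by (rule prob_space_PiM) (simp add: MX_prob)
qed

lemma q_comp:
  assumes "l \<in> I"
  shows "(\<lambda>x. q (x l)) \<in> borel_measurable (PiM I (\<lambda>_. MX))"
proof -
  have "(\<lambda>x. x l) \<in> measurable (PiM I (\<lambda>_. MX)) MX"
    using measurable_component_singleton[of l I "\<lambda>_. MX"] assms by simp
  from measurable_compose[OF this q_meas] show ?thesis .
qed

lemma integrable_bounded_Pi:
  fixes f :: "_ \<Rightarrow> real"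
  assumes "f \<in> borel_measurable (PiM I (\<lambda>_. MX))" "\<And>x. \<bar>f x\<bar> \<le> B"
  shows "integrable (PiM I (\<lambda>_. MX)) f"
proof -
  interpret P: prob_space "PiM I (\<lambda>_. MX)" by (rule prob_Pi)
  show ?thesis by (rule P.integrable_const_bound[where B=B]) (use assms in auto)
qed

lemma inner_int:
  "(\<integral>y. (if q y \<le> t then a else 0) \<partial>MX) = F t * a"
proof -
  interpret prob_space MX by (rule MX_prob)
  have "(\<integral>y. (if q y \<le> t then a else 0) \<partial>MX) = (\<integral>y. indicator {v \<in> space MX. q v \<le> t} y * a \<partial>MX)"
    by (rule Bochner_Integration.integral_cong) (auto simp: indicator_def)
  also have "\<dots> = F t * a" unfolding F_def by simp
  finally show ?thesis .
qed

lemma integral_indep_coord: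
  fixes c w :: "(nat \<Rightarrow> real) \<Rightarrow> real"
  assumes j: "j < n"
    and c[measurable]: "c \<in> borel_measurable (PiM {..<n} (\<lambda>_. MX))"
    and w[measurable]: "w \<in> borel_measurable (PiM {..<n} (\<lambda>_. MX))"
    and wB: "\<And>x. \<bar>w x\<bar> \<le> B"
    and ic: "\<And>x y. c (x(j:=y)) = c x" and iw: "\<And>x y. w (x(j:=y)) = w x"
  shows "(\<integral>x. (if q (x j) \<le> c x then w x else 0) \<partial>PiM {..<n} (\<lambda>_. MX))
       = (\<integral>x. F (c x) * w x \<partial>PiM {..<n} (\<lambda>_. MX))"
proof -
  interpret product_prob_space "\<lambda>_. MX"
    by (simp add: MX_prob product_prob_space_def prob_space_imp_sigma_finite product_prob_space_axioms_def product_sigma_finite_def)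
  interpret MX: prob_space MX by (rule MX_prob)
  define I' where "I' = {..<n} - {j}"
  have ins: "{..<n} = insert j I'" using j unfolding I'_def by auto
  have fin: "finite I'" "j \<notin> I'" unfolding I'_def by auto
  have [measurable]: "(\<lambda>x. q (x j)) \<in> borel_measurable (PiM {..<n} (\<lambda>_. MX))"
    using j by (intro q_comp) auto
  have int1: "integrable (PiM {..<n} (\<lambda>_. MX)) (\<lambda>x. if q (x j) \<le> c x then w x else 0)"
  proof (rule integrable_bounded_Pi[where B=B])
    fix x show "\<bar>if q (x j) \<le> c x then w x else 0\<bar> \<le> B"
      using wB[of x] by (auto intro: order_trans[OF abs_ge_zero])
  qed simp
  have int2: "integrable (PiM {..<n} (\<lambda>_. MX)) (\<lambda>x. F (c x) * w x)"
  proof (rule integrable_bounded_Pi[where B=B])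
    fix x
    have "\<bar>F (c x) * w x\<bar> = F (c x) * \<bar>w x\<bar>" using F_nn by (simp add: abs_mult)
    also have "\<dots> \<le> 1 * B"
      by (rule mult_mono) (use F_le1 F_nn wB in \<open>auto intro: order_trans[OF abs_ge_zero wB]\<close>)
    finally show "\<bar>F (c x) * w x\<bar> \<le> B" by simp
  qed simp
  have "(\<integral>x. (if q (x j) \<le> c x then w x else 0) \<partial>PiM {..<n} (\<lambda>_. MX))
      = (\<integral>x. (\<integral>y. (if q ((x(j:=y)) j) \<le> c (x(j:=y)) then w (x(j:=y)) else 0) \<partial>MX) \<partial>PiM I' (\<lambda>_. MX))"
    using product_integral_insert[OF fin, of "\<lambda>x. if q (x j) \<le> c x then w x else 0"] int1
    unfolding ins by simp
  also have "\<dots> = (\<integral>x. F (c x) * w x \<partial>PiM I' (\<lambda>_. MX))"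
    by (rule Bochner_Integration.integral_cong) (simp_all only: ic iw fun_upd_same inner_int)
  also have "\<dots> = (\<integral>x. (\<integral>y. F (c (x(j:=y))) * w (x(j:=y)) \<partial>MX) \<partial>PiM I' (\<lambda>_. MX))"
    by (rule Bochner_Integration.integral_cong) (simp_all add: ic iw prob_space.prob_space[OF MX_prob])
  also have "\<dots> = (\<integral>x. F (c x) * w x \<partial>PiM {..<n} (\<lambda>_. MX))"
    using product_integral_insert[OF fin, of "\<lambda>x. F (c x) * w x"] int2
    unfolding ins by simp
  finally show ?thesis .
qed

end


context setting begin

definition Mj :: "real \<Rightarrow> nat \<Rightarrow> nat \<Rightarrow> nat \<Rightarrow> (nat \<Rightarrow> real) \<Rightarrow> nat" where
  "Mj \<alpha> n n0 j x = lsu_m \<alpha> n ((dexq q n0 x)(j := 0))"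

definition FDRq :: "real \<Rightarrow> nat \<Rightarrow> nat \<Rightarrow> real" where
  "FDRq \<alpha> n n0 = (\<integral>x. real (card {i \<in> lsu_rej \<alpha> n (dexq q n0 x). i < n0}) /
      real (max (card (lsu_rej \<alpha> n (dexq q n0 x))) 1) \<partial>PiM {..<n} (\<lambda>_. MX))"

definition EERq :: "real \<Rightarrow> nat \<Rightarrow> nat \<Rightarrow> real" where
  "EERq \<alpha> n n0 = (\<integral>x. real (card {i \<in> lsu_rej \<alpha> n (dexq q n0 x). i < n0}) / real n
      \<partial>PiM {..<n} (\<lambda>_. MX))"

lemma Mj_meas:
  assumes "n0 \<le> n"
  shows "(\<lambda>x. real (Mj \<alpha> n n0 j x)) \<in> borel_measurable (PiM {..<n} (\<lambda>_. MX))"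
proof -
  have "\<And>l. l < n \<Longrightarrow> (\<lambda>x. ((dexq q n0 x)(j := 0)) l) \<in> borel_measurable (PiM {..<n} (\<lambda>_. MX))"
  proof -
    fix l assume l: "l < n"
    have [measurable]: "(\<lambda>x. q (x l)) \<in> borel_measurable (PiM {..<n} (\<lambda>_. MX))"
      using l by (intro q_comp) auto
    show "(\<lambda>x. ((dexq q n0 x)(j := 0)) l) \<in> borel_measurable (PiM {..<n} (\<lambda>_. MX))"
      unfolding dexq_def by (cases "l = j"; cases "l < n0") auto
  qed
  then have [measurable]: "(\<lambda>x. Mj \<alpha> n n0 j x) \<in> measurable (PiM {..<n} (\<lambda>_. MX)) (count_space UNIV)"
    unfolding Mj_def by (rule measurable_lsu_m)
  show ?thesis by measurable
qed

lemma Mj_inv: "j < n0 \<Longrightarrow> Mj \<alpha> n n0 j (x(j:=y)) = Mj \<alpha> n n0 j x"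
  unfolding Mj_def
  by (rule arg_cong[where f="lsu_m \<alpha> n"]) (auto simp: dexq_def fun_eq_iff)

lemma Mj_pos: "\<alpha> > 0 \<Longrightarrow> j < n0 \<Longrightarrow> n0 \<le> n \<Longrightarrow> Mj \<alpha> n n0 j x > 0"
  unfolding Mj_def by (rule loo(2)) (auto simp: dexq_def q_nn)

lemma Mj_le: "Mj \<alpha> n n0 j x \<le> n"
  unfolding Mj_def by (rule lsu_m_le_n)

lemma FDR_sum:
  assumes a: "\<alpha> > 0" and n0: "n0 \<le> n"
  shows "FDRq \<alpha> n n0 = (\<Sum>j<n0. \<integral>x. F (real (Mj \<alpha> n n0 j x) * \<alpha> / real n) / real (Mj \<alpha> n n0 j x)
                            \<partial>PiM {..<n} (\<lambda>_. MX))"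
proof -
  let ?P = "PiM {..<n} (\<lambda>_. MX)"
  let ?g = "\<lambda>j x. if q (x j) \<le> real (Mj \<alpha> n n0 j x) * \<alpha> / real n then 1 / real (Mj \<alpha> n n0 j x) else 0"
  have pt: "\<And>x. real (card {i \<in> lsu_rej \<alpha> n (dexq q n0 x). i < n0}) /
      real (max (card (lsu_rej \<alpha> n (dexq q n0 x))) 1) = (\<Sum>j<n0. ?g j x)"
  proof -
    fix x
    have "real (card {i \<in> lsu_rej \<alpha> n (dexq q n0 x). i < n0}) /
      real (max (card (lsu_rej \<alpha> n (dexq q n0 x))) 1) =
      (\<Sum>j<n0. if dexq q n0 x j \<le> real (lsu_m \<alpha> n ((dexq q n0 x)(j:=0))) * \<alpha> / real n
                 then 1 / real (lsu_m \<alpha> n ((dexq q n0 x)(j:=0))) else 0)"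
      by (rule fdp_formula[OF a n0]) (auto simp: dexq_def q_nn)
    also have "\<dots> = (\<Sum>j<n0. ?g j x)"
      by (rule sum.cong) (auto simp: dexq_def Mj_def)
    finally show "?thesis x" .
  qed
  have intg: "\<And>j. j \<in> {..<n0} \<Longrightarrow> integrable ?P (?g j)"
  proof -
    fix j assume j: "j \<in> {..<n0}"
    have [measurable]: "(\<lambda>x. real (Mj \<alpha> n n0 j x)) \<in> borel_measurable ?P" using Mj_meas n0 .
    have [measurable]: "(\<lambda>x. q (x j)) \<in> borel_measurable ?P" using j n0 by (intro q_comp) auto
    show "integrable ?P (?g j)"
    proof (rule integrable_bounded_Pi[where B=1])
      fix x show "\<bar>?g j x\<bar> \<le> 1" using Mj_pos[OF a, of j n0 n x] j n0 by auto
    qed measurable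
  qed
  have "FDRq \<alpha> n n0 = (\<integral>x. (\<Sum>j<n0. ?g j x) \<partial>?P)"
    unfolding FDRq_def pt ..
  also have "\<dots> = (\<Sum>j<n0. \<integral>x. ?g j x \<partial>?P)"
    by (rule Bochner_Integration.integral_sum[OF intg])
  also have "\<dots> = (\<Sum>j<n0. \<integral>x. F (real (Mj \<alpha> n n0 j x) * \<alpha> / real n) * (1 / real (Mj \<alpha> n n0 j x)) \<partial>?P)"
  proof (rule sum.cong[OF refl])
    fix j assume j: "j \<in> {..<n0}"
    have [measurable]: "(\<lambda>x. real (Mj \<alpha> n n0 j x)) \<in> borel_measurable ?P" using Mj_meas n0 .
    show "(\<integral>x. ?g j x \<partial>?P) = (\<integral>x. F (real (Mj \<alpha> n n0 j x) * \<alpha> / real n) * (1 / real (Mj \<alpha> n n0 j x)) \<partial>?P)"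
    proof (rule integral_indep_coord[where B=1])
      fix x show "\<bar>1 / real (Mj \<alpha> n n0 j x)\<bar> \<le> 1" using Mj_pos[OF a, of j n0 n x] j n0 by auto
    qed (use j n0 Mj_inv in auto)
  qed
  finally show ?thesis by simp
qed

lemma EER_sum:
  assumes a: "\<alpha> > 0" and n0: "n0 \<le> n"
  shows "EERq \<alpha> n n0 = (\<Sum>j<n0. \<integral>x. F (real (Mj \<alpha> n n0 j x) * \<alpha> / real n) / real n
                            \<partial>PiM {..<n} (\<lambda>_. MX))"
proof -
  let ?P = "PiM {..<n} (\<lambda>_. MX)"
  let ?g = "\<lambda>j x. if q (x j) \<le> real (Mj \<alpha> n n0 j x) * \<alpha> / real n then 1 / real n else 0"
  have pt: "\<And>x. real (card {i \<in> lsu_rej \<alpha> n (dexq q n0 x). i < n0}) / real n = (\<Sum>j<n0. ?g j x)"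
  proof -
    fix x
    have "real (card {i \<in> lsu_rej \<alpha> n (dexq q n0 x). i < n0}) / real n =
      (\<Sum>j<n0. if dexq q n0 x j \<le> real (lsu_m \<alpha> n ((dexq q n0 x)(j:=0))) * \<alpha> / real n
                 then 1 / real n else 0)"
      by (rule vn_formula[OF a n0]) (auto simp: dexq_def q_nn)
    also have "\<dots> = (\<Sum>j<n0. ?g j x)"
      by (rule sum.cong) (auto simp: dexq_def Mj_def)
    finally show "?thesis x" .
  qed
  have intg: "\<And>j. j \<in> {..<n0} \<Longrightarrow> integrable ?P (?g j)"
  proof -
    fix j assume j: "j \<in> {..<n0}"
    have [measurable]: "(\<lambda>x. real (Mj \<alpha> n n0 j x)) \<in> borel_measurable ?P" using Mj_meas n0 .
    have [measurable]: "(\<lambda>x. q (x j)) \<in> borel_measurable ?P" using j n0 by (intro q_comp) auto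
    show "integrable ?P (?g j)"
    proof (rule integrable_bounded_Pi[where B=1])
      fix x show "\<bar>?g j x\<bar> \<le> 1" using j n0 by (cases "n = 0") (auto simp: field_simps)
    qed measurable
  qed
  have "EERq \<alpha> n n0 = (\<integral>x. (\<Sum>j<n0. ?g j x) \<partial>?P)"
    unfolding EERq_def pt ..
  also have "\<dots> = (\<Sum>j<n0. \<integral>x. ?g j x \<partial>?P)"
    by (rule Bochner_Integration.integral_sum[OF intg])
  also have "\<dots> = (\<Sum>j<n0. \<integral>x. F (real (Mj \<alpha> n n0 j x) * \<alpha> / real n) * (1 / real n) \<partial>?P)"
  proof (rule sum.cong[OF refl])
    fix j assume j: "j \<in> {..<n0}"
    have [measurable]: "(\<lambda>x. real (Mj \<alpha> n n0 j x)) \<in> borel_measurable ?P" using Mj_meas n0 .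
    show "(\<integral>x. ?g j x \<partial>?P) = (\<integral>x. F (real (Mj \<alpha> n n0 j x) * \<alpha> / real n) * (1 / real n) \<partial>?P)"
    proof (rule integral_indep_coord[where B=1])
      fix x show "\<bar>1 / real n\<bar> \<le> 1" by (cases "n = 0") (auto simp: field_simps)
    qed (use j n0 Mj_inv in auto)
  qed
  finally show ?thesis by simp
qed

end


context setting begin

lemma indep_coords:
  fixes n :: nat
  assumes n: "n \<ge> 1"
  shows "prob_space.indep_vars (PiM {..<n} (\<lambda>_. MX)) (\<lambda>_. MX) (\<lambda>l x. x l) {..<n}"
proof -
  interpret P: prob_space "PiM {..<n} (\<lambda>_. MX)" by (rule prob_Pi)
  have ne: "{..<n} \<noteq> {}"
  proof -
    have "0 \<in> {..<n}" using n by simp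
    then show ?thesis by blast
  qed
  have rv: "\<And>i. i \<in> {..<n} \<Longrightarrow> (\<lambda>x. x i) \<in> measurable (PiM {..<n} (\<lambda>_. MX)) MX"
    using measurable_component_singleton by (metis (no_types))
  have d1: "distr (PiM {..<n} (\<lambda>_. MX)) (PiM {..<n} (\<lambda>_. MX)) (\<lambda>x. \<lambda>i\<in>{..<n}. x i)
     = distr (PiM {..<n} (\<lambda>_. MX)) (PiM {..<n} (\<lambda>_. MX)) (\<lambda>x. x)"
    by (rule distr_cong) (auto simp: space_PiM PiE_def extensional_restrict)
  have d2: "(\<Pi>\<^sub>M i\<in>{..<n}. distr (PiM {..<n} (\<lambda>_. MX)) MX (\<lambda>x. x i)) = PiM {..<n} (\<lambda>_. MX)"
    by (rule PiM_cong) (auto intro: distr_PiM_component MX_prob)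
  show ?thesis
    by (subst P.indep_vars_iff_distr_eq_PiM'[OF ne rv]) (simp_all add: d1 d2)
qed

definition Ncount :: "nat \<Rightarrow> real \<Rightarrow> (nat \<Rightarrow> real) \<Rightarrow> nat" where
  "Ncount n0 c x = card {l \<in> {..<n0}. q (x l) \<le> c}"

lemma Ncount_sum: "real (Ncount n0 c x) = (\<Sum>l<n0. if q (x l) \<le> c then 1 else 0)"
proof -
  have e: "{l \<in> {..<n0}. q (x l) \<le> c} = {..<n0} \<inter> {l. q (x l) \<le> c}" by auto
  show ?thesis unfolding Ncount_def by (simp only: e) (simp add: sum.If_cases)
qed

lemma hoeffding_N:
  assumes n0: "n0 \<le> n" "n0 \<ge> 1" and e: "\<epsilon> \<ge> 0"
  shows "measure (PiM {..<n} (\<lambda>_. MX)) {x \<in> space (PiM {..<n} (\<lambda>_. MX)). real (Ncount n0 c x) \<ge> real n0 * F c + \<epsilon>}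
          \<le> exp (- 2 * \<epsilon>\<^sup>2 / real n0)"
proof -
  let ?P = "PiM {..<n} (\<lambda>_. MX)"
  interpret P: prob_space ?P by (rule prob_Pi)
  define X where "X = (\<lambda>(l::nat) (x::nat\<Rightarrow>real). if q (x l) \<le> c then 1 else (0::real))"
  have ind0: "P.indep_vars (\<lambda>_. MX) (\<lambda>l x. x l) {..<n}"
    using indep_coords n0 by auto
  have ind1: "P.indep_vars (\<lambda>_. borel) (\<lambda>l x. (\<lambda>v. if q v \<le> c then 1 else (0::real)) (x l)) {..<n}"
    by (rule P.indep_vars_compose2[OF ind0]) measurable
  have ind: "P.indep_vars (\<lambda>_. borel) X {..<n0}"
    unfolding X_def by (rule P.indep_vars_subset[OF ind1]) (use n0 in auto)
  have EX: "\<And>l. l < n \<Longrightarrow> P.expectation (X l) = F c"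
  proof -
    fix l assume l: "l < n"
    have [measurable]: "(\<lambda>x. q (x l)) \<in> borel_measurable ?P" using l by (intro q_comp) auto
    have "P.expectation (X l) = (\<integral>x. (if q (x l) \<le> c then 1 else 0) * 1 \<partial>?P)"
      unfolding X_def by simp
    also have "\<dots> = (\<integral>x. F c * 1 \<partial>?P)"
      using integral_indep_coord[OF l, of "\<lambda>_. c" "\<lambda>_. 1" 1] by simp
    finally show "P.expectation (X l) = F c" by (simp add: P.prob_space)
  qed
  interpret I: indep_interval_bounded_random_variables ?P "{..<n0}" X "\<lambda>_. 0" "\<lambda>_. 1"
  proof
    show "finite {..<n0}" by simp
    show "P.indep_vars (\<lambda>_. borel) X {..<n0}" by (rule ind)
    fix i assume "i \<in> {..<n0}"
    show "AE x in ?P. X i x \<in> {0..1}" unfolding X_def by auto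
  qed
  interpret H: Hoeffding_ineq ?P "{..<n0}" X "\<lambda>_. 0" "\<lambda>_. 1" "\<Sum>i\<in>{..<n0}. P.expectation (X i)"
    by (unfold_locales; simp)
  have mu: "(\<Sum>i\<in>{..<n0}. P.expectation (X i)) = real n0 * F c"
    using EX n0 by simp
  have pos: "(\<Sum>i\<in>{..<n0}. (1 - 0)\<^sup>2) > (0::real)" using n0 by simp
  have "P.prob {x \<in> space ?P. (\<Sum>i\<in>{..<n0}. X i x) \<ge> (\<Sum>i\<in>{..<n0}. P.expectation (X i)) + \<epsilon>}
      \<le> exp (-2 * \<epsilon>\<^sup>2 / (\<Sum>i\<in>{..<n0}. (1 - 0)\<^sup>2))"
    by (rule H.Hoeffding_ineq_ge[OF e pos])
  moreover have "{x \<in> space ?P. (\<Sum>i\<in>{..<n0}. X i x) \<ge> (\<Sum>i\<in>{..<n0}. P.expectation (X i)) + \<epsilon>}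
      = {x \<in> space ?P. real (Ncount n0 c x) \<ge> real n0 * F c + \<epsilon>}"
    by (simp only: mu) (simp add: Ncount_sum X_def)
  ultimately show ?thesis by simp
qed

end


context setting begin

lemma Mj_count_bound:
  assumes a: "\<alpha> > 0" and j: "j < n0" and n0: "n0 \<le> n"
  shows "real (Mj \<alpha> n n0 j x) \<le> real (n - n0) + 1 + real (Ncount n0 (real (Mj \<alpha> n n0 j x) * \<alpha> / real n) x)"
proof -
  let ?p = "(dexq q n0 x)(j:=0)"
  let ?m = "Mj \<alpha> n n0 j x"
  let ?c = "real ?m * \<alpha> / real n"
  have "?m \<in> Sset \<alpha> n ?p"
    using lsu_m_pos_mem Mj_pos[OF a j n0, of x] unfolding Mj_def by auto
  then have m1: "?m \<le> cnt n ?p ?c" unfolding Sset_def by auto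
  have sub: "{l \<in> {..<n}. ?p l \<le> ?c} \<subseteq> ({n0..<n} \<union> {j}) \<union> {l \<in> {..<n0}. q (x l) \<le> ?c}"
    by (auto simp: dexq_def split: if_splits)
  have "cnt n ?p ?c \<le> card (({n0..<n} \<union> {j}) \<union> {l \<in> {..<n0}. q (x l) \<le> ?c})"
    unfolding cnt_def by (rule card_mono[OF _ sub]) auto
  also have "\<dots> \<le> card ({n0..<n} \<union> {j}) + card {l \<in> {..<n0}. q (x l) \<le> ?c}"
    by (rule card_Un_le)
  also have "card ({n0..<n} \<union> {j}) \<le> card {n0..<n} + card {j}"
    by (rule card_Un_le)
  finally have "cnt n ?p ?c \<le> (n - n0) + 1 + Ncount n0 ?c x"
    unfolding Ncount_def by simp
  then have "?m \<le> (n - n0) + 1 + Ncount n0 ?c x" using m1 by linarith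
  then show ?thesis by linarith
qed

lemma Ncount_mono: "c \<le> c' \<Longrightarrow> Ncount n0 c x \<le> Ncount n0 c' x"
  unfolding Ncount_def by (rule card_mono) auto

lemma Ncount_meas:
  assumes "n0 \<le> n"
  shows "(\<lambda>x. real (Ncount n0 c x)) \<in> borel_measurable (PiM {..<n} (\<lambda>_. MX))"
proof -
  have [measurable]: "\<And>l. l \<in> {..<n0} \<Longrightarrow> (\<lambda>x. q (x l)) \<in> borel_measurable (PiM {..<n} (\<lambda>_. MX))"
    using assms by (intro q_comp) auto
  show ?thesis unfolding Ncount_sum by measurable
qed

end


context setting begin

lemma gap_exists:
  assumes a: "0 < \<alpha>" "\<alpha> < 1" and Fc: "continuous_on {0..1} F"
    and Fb: "\<forall>t\<in>{0<..\<alpha>}. F t < t / \<alpha>" and d: "0 < \<delta>" "\<delta> < 1"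
  obtains c0 where "c0 > 0" "\<And>t. t \<in> {\<delta>*\<alpha>..\<alpha>} \<Longrightarrow> F t \<le> t / \<alpha> - c0"
proof -
  have sub: "{\<delta>*\<alpha>..\<alpha>} \<subseteq> {0..1}" using a d by (auto intro: order_trans[of _ "\<delta>*\<alpha>"])
  have cont: "continuous_on {\<delta>*\<alpha>..\<alpha>} (\<lambda>t. t / \<alpha> - F t)"
    using a by (intro continuous_intros continuous_on_subset[OF Fc sub]) auto
  have ne: "{\<delta>*\<alpha>..\<alpha>} \<noteq> {}" using a d by (simp add: mult_le_cancel_right2 less_imp_le)
  obtain t0 where t0: "t0 \<in> {\<delta>*\<alpha>..\<alpha>}" "\<And>t. t \<in> {\<delta>*\<alpha>..\<alpha>} \<Longrightarrow> t0 / \<alpha> - F t0 \<le> t / \<alpha> - F t"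
    using continuous_attains_inf[OF compact_Icc ne cont] by blast
  have "t0 > 0" using t0(1) a d by (auto intro: less_le_trans[OF mult_pos_pos[OF d(1) a(1)]])
  then have "F t0 < t0 / \<alpha>" using Fb t0(1) by auto
  moreover have "\<And>t. t \<in> {\<delta>*\<alpha>..\<alpha>} \<Longrightarrow> F t \<le> t / \<alpha> - (t0 / \<alpha> - F t0)"
    using t0(2) by force
  ultimately show ?thesis by (intro that[of "t0 / \<alpha> - F t0"]) auto
qed

lemma big_M_in_B:
  fixes K :: nat
  assumes a: "0 < \<alpha>" and d: "0 < \<delta>" "\<delta> < 1" and c0: "c0 > 0"
    and gap: "\<And>t. t \<in> {\<delta>*\<alpha>..\<alpha>} \<Longrightarrow> F t \<le> t / \<alpha> - c0"
    and K: "K \<ge> 1" and hK: "(1 - \<delta>) / real K \<le> c0 / 3"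
    and j: "j < n0" and n0: "n0 \<le> n" and n: "n \<ge> 1"
    and small: "real (n - n0) + 1 \<le> real n * c0 / 3"
    and big: "real (Mj \<alpha> n n0 j x) > \<delta> * real n"
  shows "\<exists>k\<in>{1..K}. real (Ncount n0 (\<delta>*\<alpha> + real k * ((1-\<delta>)*\<alpha>/real K)) x)
           \<ge> real n0 * F (\<delta>*\<alpha> + real k * ((1-\<delta>)*\<alpha>/real K)) + real n * c0 / 3"
proof -
  define h where "h = (1-\<delta>)*\<alpha>/real K"
  define i where "i = real (Mj \<alpha> n n0 j x)"
  define t where "t = i * \<alpha> / real n"
  have npos: "real n > 0" using n by simp
  have hpos: "h > 0" unfolding h_def using d a K by auto
  have ile: "i \<le> real n" unfolding i_def using Mj_le[of \<alpha> n n0 j x] by simp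
  have i_t: "i = real n * t / \<alpha>" unfolding t_def using npos a by simp
  have tle: "t \<le> \<alpha>" unfolding t_def using ile a npos by (simp add: divide_le_eq mult.commute mult_left_le_one_le)
  have tgt: "t > \<delta> * \<alpha>" unfolding t_def using big a npos unfolding i_def
    by (simp add: field_simps)
  define s where "s = (t - \<delta>*\<alpha>) / h"
  have spos: "s > 0" unfolding s_def using tgt hpos by simp
  have sle: "s \<le> real K"
  proof -
    have "t - \<delta>*\<alpha> \<le> (1-\<delta>)*\<alpha>" using tle by (simp add: algebra_simps)
    also have "\<dots> = real K * h" unfolding h_def using K by simp
    finally show ?thesis unfolding s_def using hpos by (simp add: divide_le_eq mult.commute)
  qed
  define k where "k = nat \<lceil>s\<rceil>"
  have cc: "of_int \<lceil>s\<rceil> - 1 < s \<and> s \<le> of_int \<lceil>s\<rceil>" by (rule ceiling_correct)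
  have rk: "real k = of_int \<lceil>s\<rceil>" unfolding k_def using spos by simp
  have k1: "real k \<ge> s" "real k - 1 < s" using cc rk by auto
  have kK: "k \<in> {1..K}"
  proof -
    have "real k \<ge> s" by (rule k1(1))
    then have "real k > 0" using spos by linarith
    then have "k \<ge> 1" by simp
    moreover have "k \<le> K" unfolding k_def using sle by (simp add: nat_le_iff ceiling_le_iff)
    ultimately show ?thesis by simp
  qed
  define tk where "tk = \<delta>*\<alpha> + real k * h"
  have t_le_tk: "t \<le> tk"
  proof -
    have "t - \<delta>*\<alpha> = s * h" unfolding s_def using hpos by simp
    also have "\<dots> \<le> real k * h" using k1(1) hpos by (simp add: mult_right_mono)
    finally show ?thesis unfolding tk_def by simp
  qed
  have tk_lt: "tk - h < t"
  proof -
    have "(real k - 1) * h < s * h" using k1(2) hpos by (simp add: mult_strict_right_mono)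
    also have "s * h = t - \<delta>*\<alpha>" unfolding s_def using hpos by simp
    finally show ?thesis unfolding tk_def by (simp add: algebra_simps)
  qed
  have tk_range: "tk \<in> {\<delta>*\<alpha>..\<alpha>}"
  proof -
    have "real k * h \<le> real K * h" using kK hpos by (simp add: mult_right_mono)
    also have "real K * h = (1-\<delta>)*\<alpha>" unfolding h_def using K by simp
    finally show ?thesis unfolding tk_def using hpos by (auto simp: algebra_simps)
  qed
  have Fk: "F tk \<le> tk / \<alpha> - c0" using gap[OF tk_range] .
  have hc: "h / \<alpha> \<le> c0 / 3" unfolding h_def using hK a by simp
  have bound: "i \<le> real (n - n0) + 1 + real (Ncount n0 t x)"
    using Mj_count_bound[OF a j n0, of x] unfolding i_def t_def by simp
  have mono: "real (Ncount n0 t x) \<le> real (Ncount n0 tk x)"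
    using Ncount_mono[OF t_le_tk] by simp
  have A1: "real n * t / \<alpha> > real n * (tk - h) / \<alpha>"
    using tk_lt npos a by (simp add: divide_strict_right_mono)
  have A2: "real n * (tk - h) / \<alpha> = real n * (tk / \<alpha>) - real n * (h / \<alpha>)"
    using a by (simp add: field_simps)
  have A3: "real n * (tk / \<alpha>) - real n * (h / \<alpha>) \<ge> real n * (F tk + c0) - real n * (c0 / 3)"
    using Fk hc npos by (intro diff_mono mult_left_mono) auto
  have "real n * t / \<alpha> > real n * (F tk + c0) - real n * (c0 / 3)"
    using A1 A2 A3 by linarith
  then have A: "real n * t / \<alpha> > real n * F tk + real n * c0 - real n * (c0 / 3)"
    by (simp add: algebra_simps)
  define X where "X = real n * t / \<alpha>"
  define nc where "nc = real n * c0"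
  have B1: "X > real n * F tk + 2/3 * nc" using A unfolding X_def nc_def by (simp add: algebra_simps)
  have B2: "X \<le> real (n - n0) + 1 + real (Ncount n0 t x)" using bound i_t unfolding X_def by simp
  have B4: "real (n - n0) + 1 \<le> 1/3 * nc" using small unfolding nc_def by simp
  have B5: "real n0 * F tk \<le> real n * F tk" using n0 F_nn by (simp add: mult_right_mono)
  have "real (Ncount n0 tk x) \<ge> real n0 * F tk + 1/3 * nc"
    using B1 B2 mono B4 B5 by linarith
  then have "real (Ncount n0 tk x) \<ge> real n0 * F tk + real n * c0 / 3"
    unfolding nc_def by simp
  then show ?thesis using kK unfolding tk_def h_def by blast
qed

lemma bad_event:
  fixes n0 :: "nat \<Rightarrow> nat"
  assumes a: "0 < \<alpha>" "\<alpha> < 1" and Fc: "continuous_on {0..1} F" and Fb: "\<forall>t\<in>{0<..\<alpha>}. F t < t / \<alpha>"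
    and n0: "\<forall>n. n0 n \<le> n" and lim: "(\<lambda>n. real (n0 n) / real n) \<longlonglongrightarrow> 1" and d: "0 < \<delta>" "\<delta> < 1"
  obtains B where "\<And>n. B n \<in> sets (PiM {..<n} (\<lambda>_. MX))"
    "(\<lambda>n. measure (PiM {..<n} (\<lambda>_. MX)) (B n)) \<longlonglongrightarrow> 0"
    "eventually (\<lambda>n. \<forall>j<n0 n. \<forall>x\<in>space (PiM {..<n} (\<lambda>_. MX)).
        real (Mj \<alpha> n (n0 n) j x) > \<delta> * real n \<longrightarrow> x \<in> B n) sequentially"
proof -
  obtain c0 where c0: "c0 > 0" and gap: "\<And>t. t \<in> {\<delta>*\<alpha>..\<alpha>} \<Longrightarrow> F t \<le> t / \<alpha> - c0"
    using gap_exists[OF a Fc Fb d] by blast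
  define K where "K = nat \<lceil>3 * (1 - \<delta>) / c0\<rceil> + 1"
  have K1: "K \<ge> 1" unfolding K_def by simp
  have hK: "(1 - \<delta>) / real K \<le> c0 / 3"
  proof -
    have "3 * (1 - \<delta>) / c0 \<le> real (nat \<lceil>3 * (1 - \<delta>) / c0\<rceil>)" by (rule real_nat_ceiling_ge)
    then have "3 * (1 - \<delta>) / c0 \<le> real K" unfolding K_def by simp
    then have "3 * (1 - \<delta>) \<le> real K * c0" using c0 by (simp add: divide_le_eq)
    then show ?thesis using K1 c0 by (simp add: divide_le_eq field_simps)
  qed
  define tt where "tt = (\<lambda>k::nat. \<delta>*\<alpha> + real k * ((1-\<delta>)*\<alpha>/real K))"
  define A where "A = (\<lambda>n k. {x \<in> space (PiM {..<n} (\<lambda>_. MX)).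
      real (Ncount (n0 n) (tt k) x) \<ge> real (n0 n) * F (tt k) + real n * c0 / 3})"
  define B where "B = (\<lambda>n. \<Union>k\<in>{1..K}. A n k)"
  have Asets: "A n k \<in> sets (PiM {..<n} (\<lambda>_. MX))" for n k
  proof -
    have [measurable]: "(\<lambda>x. real (Ncount (n0 n) (tt k) x)) \<in> borel_measurable (PiM {..<n} (\<lambda>_. MX))"
      using Ncount_meas n0 by auto
    show ?thesis unfolding A_def by measurable
  qed
  have Bsets: "\<And>n. B n \<in> sets (PiM {..<n} (\<lambda>_. MX))"
    unfolding B_def using Asets by auto
  have ev1: "eventually (\<lambda>n. dist (real (n0 n) / real n) 1 < min (c0/6) (1/2)) sequentially"
    using tendstoD[OF lim, of "min (c0/6) (1/2)"] c0 by simp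
  have ev2: "eventually (\<lambda>n. dist (1 / real n) 0 < c0/6) sequentially"
    using tendstoD[OF lim_inverse_n', of "c0/6"] c0 by (simp add: inverse_eq_divide)
  have ev3: "eventually (\<lambda>n. n \<ge> 1) sequentially" unfolding eventually_sequentially by (rule exI[of _ 1]) simp
  have good: "eventually (\<lambda>n. n \<ge> 1 \<and> n0 n \<ge> 1 \<and> real (n - n0 n) + 1 \<le> real n * c0 / 3) sequentially"
    using ev1 ev2 ev3
  proof eventually_elim
    case (elim n)
    have npos: "real n > 0" using elim(3) by simp
    have ab: "\<bar>real (n0 n) / real n - 1\<bar> < c0/6" "\<bar>real (n0 n) / real n - 1\<bar> < 1/2"
      using elim(1) by (auto simp: dist_real_def)
    have r1: "real (n0 n) / real n > 1 - c0/6" "real (n0 n) / real n > 1/2"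
      using ab unfolding abs_less_iff by linarith+
    have r2: "1 / real n < c0/6" using elim(2) npos by (simp add: dist_real_def)
    have "real (n0 n) > real n / 2" using r1(2) npos by (simp add: field_simps)
    then have "real (n0 n) > 0" using npos by linarith
    then have n01: "n0 n \<ge> 1" by simp
    have "real (n0 n) > real n * (1 - c0/6)" using r1(1) npos by (simp add: field_simps)
    moreover have "1 < real n * (c0/6)" using r2 npos by (simp add: field_simps)
    moreover have "real (n - n0 n) = real n - real (n0 n)" using n0 by (simp add: of_nat_diff)
    ultimately have "real (n - n0 n) + 1 \<le> real n * c0 / 3" by (simp add: algebra_simps)
    then show ?case using elim(3) n01 by simp
  qed
  have incl: "eventually (\<lambda>n. \<forall>j<n0 n. \<forall>x\<in>space (PiM {..<n} (\<lambda>_. MX)).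
        real (Mj \<alpha> n (n0 n) j x) > \<delta> * real n \<longrightarrow> x \<in> B n) sequentially"
    using good
  proof eventually_elim
    case (elim n)
    show ?case
    proof (intro allI impI ballI)
      fix j x assume j: "j < n0 n" and x: "x \<in> space (PiM {..<n} (\<lambda>_. MX))"
        and big: "real (Mj \<alpha> n (n0 n) j x) > \<delta> * real n"
      obtain k where "k \<in> {1..K}" "real (Ncount (n0 n) (tt k) x) \<ge> real (n0 n) * F (tt k) + real n * c0 / 3"
        using big_M_in_B[OF a(1) d c0 gap K1 hK j _ _ _ big] n0 elim unfolding tt_def by auto
      then show "x \<in> B n" using x unfolding B_def A_def by auto
    qed
  qed
  define g where "g = (\<lambda>n::nat. real K * exp (- (2 * c0\<^sup>2 / 9)) ^ n)"
  have glim: "g \<longlonglongrightarrow> 0"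
  proof -
    have "(\<lambda>n. exp (- (2 * c0\<^sup>2 / 9)) ^ n) \<longlonglongrightarrow> 0"
      by (rule LIMSEQ_power_zero) (use c0 in simp)
    from tendsto_mult_right_zero[OF this, of "real K"] show ?thesis unfolding g_def by simp
  qed
  have bnd: "eventually (\<lambda>n. measure (PiM {..<n} (\<lambda>_. MX)) (B n) \<le> g n) sequentially"
    using good
  proof eventually_elim
    case (elim n)
    have "measure (PiM {..<n} (\<lambda>_. MX)) (B n) \<le> (\<Sum>k\<in>{1..K}. measure (PiM {..<n} (\<lambda>_. MX)) (A n k))"
      unfolding B_def by (rule measure_UNION_le) (use Asets in auto)
    also have "\<dots> \<le> (\<Sum>k\<in>{1..K}. exp (- (2 * c0\<^sup>2 / 9)) ^ n)"
    proof (rule sum_mono)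
      fix k assume "k \<in> {1..K}"
      have "measure (PiM {..<n} (\<lambda>_. MX)) (A n k) \<le> exp (- 2 * (real n * c0 / 3)\<^sup>2 / real (n0 n))"
        unfolding A_def by (rule hoeffding_N) (use n0 elim c0 in auto)
      also have "\<dots> \<le> exp (real n * (- (2 * c0\<^sup>2 / 9)))"
      proof -
        have n0p: "real (n0 n) > 0" "real (n0 n) \<le> real n" using elim n0 by auto
        have "real n * (2 * c0\<^sup>2 / 9) = 2 * (real n * c0 / 3)\<^sup>2 / real n"
          using elim by (simp add: power2_eq_square field_simps)
        also have "\<dots> \<le> 2 * (real n * c0 / 3)\<^sup>2 / real (n0 n)"
          using n0p by (intro divide_left_mono) auto
        finally show ?thesis by simp
      qed
      also have "\<dots> = exp (- (2 * c0\<^sup>2 / 9)) ^ n"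
        by (rule exp_of_nat_mult)
      finally show "measure (PiM {..<n} (\<lambda>_. MX)) (A n k) \<le> exp (- (2 * c0\<^sup>2 / 9)) ^ n" .
    qed
    also have "\<dots> = g n" unfolding g_def by simp
    finally show ?case .
  qed
  have "(\<lambda>n. measure (PiM {..<n} (\<lambda>_. MX)) (B n)) \<longlonglongrightarrow> 0"
    by (rule tendsto_sandwich[OF _ bnd tendsto_const glim]) simp
  then show ?thesis using that Bsets incl by blast
qed

end


lemma three_eps:
  fixes a b c e x :: real
  shows "\<bar>a - b\<bar> \<le> \<bar>a - c\<bar> + \<bar>c - b\<bar> \<Longrightarrow> \<bar>a - c\<bar> \<le> e/3 + x \<Longrightarrow> x < e/3 \<Longrightarrow> \<bar>c - b\<bar> < e/3 \<Longrightarrow> \<bar>a - b\<bar> < e"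
  by linarith

lemma int_dev:
  fixes f g :: "'a \<Rightarrow> real"
  assumes P: "prob_space P" and f: "integrable P f" and g: "integrable P g"
    and b: "\<And>x. x \<in> space P \<Longrightarrow> \<bar>f x - c\<bar> \<le> g x"
  shows "\<bar>(\<integral>x. f x \<partial>P) - c\<bar> \<le> (\<integral>x. g x \<partial>P)"
proof -
  interpret prob_space P by (rule P)
  have e: "(\<integral>x. f x \<partial>P) - c = (\<integral>x. f x - c \<partial>P)"
    using f by (simp add: prob_space)
  have "(\<integral>x. f x - c \<partial>P) \<le> (\<integral>x. g x \<partial>P)"
    by (rule integral_mono) (use f g b in \<open>auto simp: abs_le_iff\<close>)
  moreover have "(\<integral>x. - (f x - c) \<partial>P) \<le> (\<integral>x. g x \<partial>P)"
    by (rule integral_mono) (use f g b in \<open>auto simp: abs_le_iff\<close>)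
  moreover have "(\<integral>x. - (f x - c) \<partial>P) = - (\<integral>x. f x - c \<partial>P)" by (rule integral_minus)
  ultimately show ?thesis unfolding e abs_le_iff by linarith
qed


context setting begin

lemma F_le_ratio:
  assumes a: "0 < \<alpha>" and Fb: "\<forall>t\<in>{0<..\<alpha>}. F t < t / \<alpha>"
    and j: "j < n0" and n0: "n0 \<le> n"
  shows "F (real (Mj \<alpha> n n0 j x) * \<alpha> / real n) \<le> real (Mj \<alpha> n n0 j x) / real n"
proof -
  let ?M = "real (Mj \<alpha> n n0 j x)"
  have Mp: "?M > 0" using Mj_pos[OF a j n0] by simp
  have Mn: "?M \<le> real n" using Mj_le[of \<alpha> n n0 j x] by simp
  have np: "real n > 0" using j n0 by simp
  have "?M * \<alpha> / real n \<in> {0<..\<alpha>}"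
    using Mp Mn np a by (auto simp: divide_le_eq mult.commute mult_left_le_one_le)
  then have "F (?M * \<alpha> / real n) < (?M * \<alpha> / real n) / \<alpha>" using Fb by blast
  also have "\<dots> = ?M / real n" using a by simp
  finally show ?thesis by simp
qed

lemma EER_lim:
  fixes n0 :: "nat \<Rightarrow> nat"
  assumes a: "0 < \<alpha>" "\<alpha> < 1" and Fc: "continuous_on {0..1} F" and Fb: "\<forall>t\<in>{0<..\<alpha>}. F t < t / \<alpha>"
    and n0: "\<forall>n. n0 n \<le> n" and lim: "(\<lambda>n. real (n0 n) / real n) \<longlonglongrightarrow> 1"
  shows "(\<lambda>n. EERq \<alpha> n (n0 n)) \<longlonglongrightarrow> 0"
proof (rule tendstoI)
  fix e :: real assume e: "e > 0"
  define \<delta> where "\<delta> = min (e/2) (1/2)"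
  have d: "0 < \<delta>" "\<delta> < 1" "\<delta> \<le> e/2" unfolding \<delta>_def using e by auto
  obtain B where Bs: "\<And>n. B n \<in> sets (PiM {..<n} (\<lambda>_. MX))"
    and Bl: "(\<lambda>n. measure (PiM {..<n} (\<lambda>_. MX)) (B n)) \<longlonglongrightarrow> 0"
    and Bi: "eventually (\<lambda>n. \<forall>j<n0 n. \<forall>x\<in>space (PiM {..<n} (\<lambda>_. MX)).
        real (Mj \<alpha> n (n0 n) j x) > \<delta> * real n \<longrightarrow> x \<in> B n) sequentially"
    using bad_event[OF a Fc Fb n0 lim d(1,2)] by blast
  have Bsmall: "eventually (\<lambda>n. measure (PiM {..<n} (\<lambda>_. MX)) (B n) < e/2) sequentially"
    using tendstoD[OF Bl, of "e/2"] e by (simp add: dist_real_def)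
  show "eventually (\<lambda>n. dist (EERq \<alpha> n (n0 n)) 0 < e) sequentially"
    using Bi Bsmall
  proof eventually_elim
    case (elim n)
    let ?P = "PiM {..<n} (\<lambda>_. MX)"
    interpret P: prob_space ?P by (rule prob_Pi)
    let ?m = "n0 n"
    have n0n: "?m \<le> n" using n0 by auto
    have tm: "(\<integral>x. F (real (Mj \<alpha> n ?m j x) * \<alpha> / real n) / real n \<partial>?P) \<in> {0 .. (\<delta> + measure ?P (B n)) / real n}"
      if j: "j < ?m" for j
    proof -
      have np: "real n > 0" using j n0n by simp
      have [measurable]: "(\<lambda>x. real (Mj \<alpha> n ?m j x)) \<in> borel_measurable ?P" using Mj_meas n0n .
      have [measurable]: "B n \<in> sets ?P" by (rule Bs)
      have i1: "integrable ?P (\<lambda>x. F (real (Mj \<alpha> n ?m j x) * \<alpha> / real n) / real n)"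
      proof (rule integrable_bounded_Pi[where B=1])
        fix x
        have "F (real (Mj \<alpha> n ?m j x) * \<alpha> / real n) \<le> 1" by (rule F_le1)
        moreover have "1 \<le> real n" using np by simp
        ultimately show "\<bar>F (real (Mj \<alpha> n ?m j x) * \<alpha> / real n) / real n\<bar> \<le> 1"
          using F_nn np by (simp add: divide_le_eq)
      qed simp
      have i2: "integrable ?P (\<lambda>x. (\<delta> + indicator (B n) x) / real n)"
        by (rule integrable_bounded_Pi[where B="(\<delta> + 1) / real n"]) (use np d in \<open>auto simp: indicator_def divide_right_mono\<close>)
      have "(\<integral>x. F (real (Mj \<alpha> n ?m j x) * \<alpha> / real n) / real n \<partial>?P) \<le> (\<integral>x. (\<delta> + indicator (B n) x) / real n \<partial>?P)"
      proof (rule integral_mono[OF i1 i2])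
        fix x assume x: "x \<in> space ?P"
        have F1: "F (real (Mj \<alpha> n ?m j x) * \<alpha> / real n) \<le> real (Mj \<alpha> n ?m j x) / real n"
          by (rule F_le_ratio[OF a(1) Fb j n0n])
        have "real (Mj \<alpha> n ?m j x) / real n \<le> \<delta> + indicator (B n) x"
        proof (cases "real (Mj \<alpha> n ?m j x) > \<delta> * real n")
          case True
          then have "x \<in> B n" using elim(1) j x by auto
          moreover have "real (Mj \<alpha> n ?m j x) / real n \<le> 1" using Mj_le[of \<alpha> n ?m j x] np by simp
          ultimately show ?thesis using d by simp
        next
          case False
          then have "real (Mj \<alpha> n ?m j x) / real n \<le> \<delta>" using np by (simp add: divide_le_eq)
          then show ?thesis by (simp add: indicator_def)
        qed
        with F1 show "F (real (Mj \<alpha> n ?m j x) * \<alpha> / real n) / real n \<le> (\<delta> + indicator (B n) x) / real n"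
          using np by (simp add: divide_right_mono)
      qed
      also have "(\<integral>x. (\<delta> + indicator (B n) x) / real n \<partial>?P) = (\<delta> + measure ?P (B n)) / real n"
      proof -
        have ii: "integrable ?P (indicator (B n) :: _ \<Rightarrow> real)"
          using Bs[of n] by (intro integrable_real_indicator) (auto simp: less_top[symmetric])
        have "(\<integral>x. \<delta> + indicator (B n) x \<partial>?P) = \<delta> + measure ?P (B n)"
          using ii Bs[of n] by (simp add: P.prob_space)
        then show ?thesis by simp
      qed
      finally have up: "(\<integral>x. F (real (Mj \<alpha> n ?m j x) * \<alpha> / real n) / real n \<partial>?P) \<le> (\<delta> + measure ?P (B n)) / real n" .
      have lo: "0 \<le> (\<integral>x. F (real (Mj \<alpha> n ?m j x) * \<alpha> / real n) / real n \<partial>?P)"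
        by (rule integral_nonneg_AE) (use F_nn in auto)
      show ?thesis using up lo by simp
    qed
    have EE: "EERq \<alpha> n ?m = (\<Sum>j<?m. \<integral>x. F (real (Mj \<alpha> n ?m j x) * \<alpha> / real n) / real n \<partial>?P)"
      by (rule EER_sum[OF a(1) n0n])
    have lo: "EERq \<alpha> n ?m \<ge> 0" unfolding EE using tm by (intro sum_nonneg) auto
    have "EERq \<alpha> n ?m \<le> (\<Sum>j<?m. (\<delta> + measure ?P (B n)) / real n)"
      unfolding EE using tm by (intro sum_mono) auto
    also have "\<dots> = real ?m * ((\<delta> + measure ?P (B n)) / real n)" by simp
    also have "\<dots> \<le> \<delta> + measure ?P (B n)"
    proof (cases "?m = 0")
      case False
      then have np: "real n > 0" using n0n by simp
      have "real ?m / real n \<le> 1" using n0n np by simp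
      moreover have "\<delta> + measure ?P (B n) \<ge> 0" using d by simp
      ultimately have "real ?m / real n * (\<delta> + measure ?P (B n)) \<le> 1 * (\<delta> + measure ?P (B n))"
        by (intro mult_right_mono) auto
      then show ?thesis by simp
    qed (use d in simp)
    finally show ?case using lo elim(2) d by (simp add: dist_real_def)
  qed
qed

end


context setting begin

lemma FDR_lim:
  fixes n0 :: "nat \<Rightarrow> nat"
  assumes a: "0 < \<alpha>" "\<alpha> < 1" and Fc: "continuous_on {0..1} F" and Fb: "\<forall>t\<in>{0<..\<alpha>}. F t < t / \<alpha>"
    and n0: "\<forall>n. n0 n \<le> n" and lim: "(\<lambda>n. real (n0 n) / real n) \<longlonglongrightarrow> 1"
    and gl: "((\<lambda>t. F t / t) \<longlongrightarrow> \<gamma>) (at_right 0)"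
  shows "(\<lambda>n. FDRq \<alpha> n (n0 n)) \<longlonglongrightarrow> \<alpha> * \<gamma>"
proof (rule tendstoI)
  fix e :: real assume e: "e > 0"
  define C where "C = 1 / \<alpha> + \<bar>\<gamma>\<bar>"
  have C0: "C \<ge> 0" unfolding C_def using a by simp
  define \<epsilon> where "\<epsilon> = e / (3 * \<alpha>)"
  have eps: "\<epsilon> > 0" unfolding \<epsilon>_def using e a by simp
  have "eventually (\<lambda>t. dist (F t / t) \<gamma> < \<epsilon>) (at_right 0)" using tendstoD[OF gl eps] .
  then obtain b where b: "b > 0" "\<And>t. t > 0 \<Longrightarrow> t < b \<Longrightarrow> \<bar>F t / t - \<gamma>\<bar> < \<epsilon>"
    unfolding eventually_at_right_field by (auto simp: dist_real_def)
  define \<delta> where "\<delta> = min (b / (2 * \<alpha>)) (1/2)"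
  have d: "0 < \<delta>" "\<delta> < 1" unfolding \<delta>_def using b a by auto
  have db: "\<delta> * \<alpha> < b"
  proof -
    have "\<delta> * \<alpha> \<le> b / (2 * \<alpha>) * \<alpha>" unfolding \<delta>_def using a by (intro mult_right_mono) auto
    also have "\<dots> = b / 2" using a by simp
    finally show ?thesis using b by simp
  qed
  obtain B where Bs: "\<And>n. B n \<in> sets (PiM {..<n} (\<lambda>_. MX))"
    and Bl: "(\<lambda>n. measure (PiM {..<n} (\<lambda>_. MX)) (B n)) \<longlonglongrightarrow> 0"
    and Bi: "eventually (\<lambda>n. \<forall>j<n0 n. \<forall>x\<in>space (PiM {..<n} (\<lambda>_. MX)).
        real (Mj \<alpha> n (n0 n) j x) > \<delta> * real n \<longrightarrow> x \<in> B n) sequentially"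
    using bad_event[OF a Fc Fb n0 lim d] by blast
  have "(\<lambda>n. \<alpha> * C * measure (PiM {..<n} (\<lambda>_. MX)) (B n)) \<longlonglongrightarrow> \<alpha> * C * 0"
    by (intro tendsto_intros Bl)
  then have t0: "(\<lambda>n. \<alpha> * C * measure (PiM {..<n} (\<lambda>_. MX)) (B n)) \<longlonglongrightarrow> 0" by simp
  have "eventually (\<lambda>n. dist (\<alpha> * C * measure (PiM {..<n} (\<lambda>_. MX)) (B n)) 0 < e/3) sequentially"
    using e by (intro tendstoD[OF t0]) auto
  then have Bsmall: "eventually (\<lambda>n. \<alpha> * C * measure (PiM {..<n} (\<lambda>_. MX)) (B n) < e/3) sequentially"
    by (rule eventually_mono) (auto simp: dist_real_def abs_less_iff)
  have "(\<lambda>n. \<alpha> * \<gamma> * (real (n0 n) / real n - 1)) \<longlonglongrightarrow> \<alpha> * \<gamma> * (1 - 1)"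
    by (intro tendsto_intros lim)
  then have t1: "(\<lambda>n. \<alpha> * \<gamma> * (real (n0 n) / real n - 1)) \<longlonglongrightarrow> 0" by simp
  have "eventually (\<lambda>n. dist (\<alpha> * \<gamma> * (real (n0 n) / real n - 1)) 0 < e/3) sequentially"
    using e by (intro tendstoD[OF t1]) auto
  then have Nsmall: "eventually (\<lambda>n. \<bar>\<alpha> * \<gamma> * (real (n0 n) / real n - 1)\<bar> < e/3) sequentially"
    by (rule eventually_mono) (auto simp: dist_real_def)
  have ev1: "eventually (\<lambda>n. n \<ge> 1) sequentially" unfolding eventually_sequentially by (rule exI[of _ 1]) simp
  show "eventually (\<lambda>n. dist (FDRq \<alpha> n (n0 n)) (\<alpha> * \<gamma>) < e) sequentially"
    using Bi Bsmall Nsmall ev1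
  proof eventually_elim
    case (elim n)
    let ?P = "PiM {..<n} (\<lambda>_. MX)"
    interpret P: prob_space ?P by (rule prob_Pi)
    let ?m = "n0 n"
    have n0n: "?m \<le> n" using n0 by auto
    have np: "real n > 0" using elim(4) by simp
    let ?c = "\<alpha> / real n * \<gamma>"
    have tm: "\<bar>(\<integral>x. F (real (Mj \<alpha> n ?m j x) * \<alpha> / real n) / real (Mj \<alpha> n ?m j x) \<partial>?P) - ?c\<bar>
        \<le> \<alpha> / real n * (\<epsilon> + C * measure ?P (B n))"
      if j: "j < ?m" for j
    proof -
      have [measurable]: "(\<lambda>x. real (Mj \<alpha> n ?m j x)) \<in> borel_measurable ?P" using Mj_meas n0n .
      have [measurable]: "B n \<in> sets ?P" by (rule Bs)
      have ii: "integrable ?P (indicator (B n) :: _ \<Rightarrow> real)"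
        using Bs[of n] by (intro integrable_real_indicator) (auto simp: less_top[symmetric])
      have i1: "integrable ?P (\<lambda>x. F (real (Mj \<alpha> n ?m j x) * \<alpha> / real n) / real (Mj \<alpha> n ?m j x))"
      proof (rule integrable_bounded_Pi[where B=1])
        fix x
        have "F (real (Mj \<alpha> n ?m j x) * \<alpha> / real n) \<le> 1" by (rule F_le1)
        moreover have "1 \<le> real (Mj \<alpha> n ?m j x)" using Mj_pos[OF a(1) j n0n, of x] by simp
        ultimately show "\<bar>F (real (Mj \<alpha> n ?m j x) * \<alpha> / real n) / real (Mj \<alpha> n ?m j x)\<bar> \<le> 1"
          using F_nn by (simp add: divide_le_eq)
      qed simp
      have i2: "integrable ?P (\<lambda>x. \<alpha> / real n * (\<epsilon> + C * indicator (B n) x))"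
        using ii by simp
      have "\<bar>(\<integral>x. F (real (Mj \<alpha> n ?m j x) * \<alpha> / real n) / real (Mj \<alpha> n ?m j x) \<partial>?P) - ?c\<bar>
          \<le> (\<integral>x. \<alpha> / real n * (\<epsilon> + C * indicator (B n) x) \<partial>?P)"
      proof (rule int_dev[OF prob_Pi i1 i2])
        fix x assume x: "x \<in> space ?P"
        define M where "M = real (Mj \<alpha> n ?m j x)"
        define t where "t = M * \<alpha> / real n"
        have Mp: "M > 0" unfolding M_def using Mj_pos[OF a(1) j n0n] by simp
        have Mn: "M \<le> real n" unfolding M_def using Mj_le[of \<alpha> n ?m j x] by simp
        have tp: "t > 0" unfolding t_def using Mp a np by simp
        have ta: "t \<le> \<alpha>" unfolding t_def using Mn np a by (simp add: divide_le_eq mult.commute mult_left_le_one_le)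
        have eq: "F t / M - ?c = \<alpha> / real n * (F t / t - \<gamma>)"
          unfolding t_def using Mp np a by (simp add: field_simps)
        have dev: "\<bar>F t / t - \<gamma>\<bar> \<le> \<epsilon> + C * indicator (B n) x"
        proof (cases "M > \<delta> * real n")
          case True
          then have "x \<in> B n" using elim(1) j x unfolding M_def by auto
          have "F t < t / \<alpha>" using Fb tp ta by auto
          then have "F t / t < 1 / \<alpha>" using tp by (simp add: divide_less_eq field_simps)
          moreover have "F t / t \<ge> 0" using F_nn tp by simp
          ultimately have "\<bar>F t / t - \<gamma>\<bar> \<le> C" unfolding C_def by linarith
          then show ?thesis using \<open>x \<in> B n\<close> eps by simp
        next
          case False
          then have "t \<le> \<delta> * \<alpha>" unfolding t_def using np a by (simp add: divide_le_eq field_simps)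
          then have "\<bar>F t / t - \<gamma>\<bar> < \<epsilon>" using b(2)[OF tp] db by linarith
          then show ?thesis using C0 by (simp add: indicator_def)
        qed
        have "\<bar>F t / M - ?c\<bar> = \<alpha> / real n * \<bar>F t / t - \<gamma>\<bar>" unfolding eq using a np by (simp add: abs_mult)
        also have "\<dots> \<le> \<alpha> / real n * (\<epsilon> + C * indicator (B n) x)"
          using dev a np by (intro mult_left_mono) auto
        finally show "\<bar>F (real (Mj \<alpha> n ?m j x) * \<alpha> / real n) / real (Mj \<alpha> n ?m j x) - ?c\<bar>
            \<le> \<alpha> / real n * (\<epsilon> + C * indicator (B n) x)" unfolding M_def t_def .
      qed
      also have "(\<integral>x. \<alpha> / real n * (\<epsilon> + C * indicator (B n) x) \<partial>?P) = \<alpha> / real n * (\<epsilon> + C * measure ?P (B n))"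
        using ii Bs[of n] by (simp add: P.prob_space)
      finally show ?thesis .
    qed
    have FF: "FDRq \<alpha> n ?m = (\<Sum>j<?m. \<integral>x. F (real (Mj \<alpha> n ?m j x) * \<alpha> / real n) / real (Mj \<alpha> n ?m j x) \<partial>?P)"
      by (rule FDR_sum[OF a(1) n0n])
    have "\<bar>FDRq \<alpha> n ?m - real ?m * ?c\<bar> = \<bar>\<Sum>j<?m. ((\<integral>x. F (real (Mj \<alpha> n ?m j x) * \<alpha> / real n) / real (Mj \<alpha> n ?m j x) \<partial>?P) - ?c)\<bar>"
      unfolding FF by (simp add: sum_subtractf)
    also have "\<dots> \<le> (\<Sum>j<?m. \<bar>(\<integral>x. F (real (Mj \<alpha> n ?m j x) * \<alpha> / real n) / real (Mj \<alpha> n ?m j x) \<partial>?P) - ?c\<bar>)"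
      by (rule sum_abs)
    also have "\<dots> \<le> (\<Sum>j<?m. \<alpha> / real n * (\<epsilon> + C * measure ?P (B n)))"
      using tm by (intro sum_mono) auto
    also have "\<dots> = real ?m / real n * (\<alpha> * (\<epsilon> + C * measure ?P (B n)))" by simp
    also have "\<dots> \<le> 1 * (\<alpha> * (\<epsilon> + C * measure ?P (B n)))"
      using n0n np a eps C0 by (intro mult_right_mono) auto
    also have "\<dots> = e / 3 + \<alpha> * C * measure ?P (B n)"
      unfolding \<epsilon>_def using a by (simp add: field_simps)
    finally have D1: "\<bar>FDRq \<alpha> n ?m - real ?m * ?c\<bar> \<le> e / 3 + \<alpha> * C * measure ?P (B n)" .
    have D2: "real ?m * ?c - \<alpha> * \<gamma> = \<alpha> * \<gamma> * (real ?m / real n - 1)"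
      using np by (simp add: field_simps)
    have tri: "\<bar>FDRq \<alpha> n ?m - \<alpha> * \<gamma>\<bar> \<le> \<bar>FDRq \<alpha> n ?m - real ?m * ?c\<bar> + \<bar>real ?m * ?c - \<alpha> * \<gamma>\<bar>"
      using abs_triangle_ineq[of "FDRq \<alpha> n ?m - real ?m * ?c" "real ?m * ?c - \<alpha> * \<gamma>"] by simp
    have "\<bar>real ?m * ?c - \<alpha> * \<gamma>\<bar> < e/3" using D2 elim(3) by simp
    have "\<bar>FDRq \<alpha> n ?m - \<alpha> * \<gamma>\<bar> < e"
      by (rule three_eps[OF tri D1 elim(2) \<open>\<bar>real ?m * ?c - \<alpha> * \<gamma>\<bar> < e/3\<close>])
    then show ?case by (simp add: dist_real_def)
  qed
qed

end


context setting begin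

lemma EER_integrand_meas:
  assumes a: "\<alpha> > 0" and n0: "n0 \<le> n"
  shows "(\<lambda>x. real (card {i \<in> lsu_rej \<alpha> n (dexq q n0 x). i < n0}) / real n)
           \<in> borel_measurable (PiM {..<n} (\<lambda>_. MX))"
proof -
  have eq: "(\<lambda>x. real (card {i \<in> lsu_rej \<alpha> n (dexq q n0 x). i < n0}) / real n)
     = (\<lambda>x. \<Sum>j<n0. if q (x j) \<le> real (Mj \<alpha> n n0 j x) * \<alpha> / real n then 1 / real n else 0)"
  proof (rule ext)
    fix x
    have "real (card {i \<in> lsu_rej \<alpha> n (dexq q n0 x). i < n0}) / real n =
      (\<Sum>j<n0. if dexq q n0 x j \<le> real (lsu_m \<alpha> n ((dexq q n0 x)(j:=0))) * \<alpha> / real n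
                 then 1 / real n else 0)"
      by (rule vn_formula[OF a n0]) (auto simp: dexq_def q_nn)
    also have "\<dots> = (\<Sum>j<n0. if q (x j) \<le> real (Mj \<alpha> n n0 j x) * \<alpha> / real n then 1 / real n else 0)"
      by (rule sum.cong) (auto simp: dexq_def Mj_def)
    finally show "real (card {i \<in> lsu_rej \<alpha> n (dexq q n0 x). i < n0}) / real n =
      (\<Sum>j<n0. if q (x j) \<le> real (Mj \<alpha> n n0 j x) * \<alpha> / real n then 1 / real n else 0)" .
  qed
  have [measurable]: "\<And>j. j \<in> {..<n0} \<Longrightarrow> (\<lambda>x. q (x j)) \<in> borel_measurable (PiM {..<n} (\<lambda>_. MX))"
    using n0 by (intro q_comp) auto
  have [measurable]: "\<And>j. (\<lambda>x. real (Mj \<alpha> n n0 j x)) \<in> borel_measurable (PiM {..<n} (\<lambda>_. MX))"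
    using Mj_meas[OF n0] .
  show ?thesis unfolding eq by measurable
qed

lemma FDR_integrand_meas:
  assumes a: "\<alpha> > 0" and n0: "n0 \<le> n"
  shows "(\<lambda>x. real (card {i \<in> lsu_rej \<alpha> n (dexq q n0 x). i < n0}) /
      real (max (card (lsu_rej \<alpha> n (dexq q n0 x))) 1))
           \<in> borel_measurable (PiM {..<n} (\<lambda>_. MX))"
proof -
  have eq: "(\<lambda>x. real (card {i \<in> lsu_rej \<alpha> n (dexq q n0 x). i < n0}) /
      real (max (card (lsu_rej \<alpha> n (dexq q n0 x))) 1))
     = (\<lambda>x. \<Sum>j<n0. if q (x j) \<le> real (Mj \<alpha> n n0 j x) * \<alpha> / real n then 1 / real (Mj \<alpha> n n0 j x) else 0)"
  proof (rule ext)
    fix x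
    have "real (card {i \<in> lsu_rej \<alpha> n (dexq q n0 x). i < n0}) /
      real (max (card (lsu_rej \<alpha> n (dexq q n0 x))) 1) =
      (\<Sum>j<n0. if dexq q n0 x j \<le> real (lsu_m \<alpha> n ((dexq q n0 x)(j:=0))) * \<alpha> / real n
                 then 1 / real (lsu_m \<alpha> n ((dexq q n0 x)(j:=0))) else 0)"
      by (rule fdp_formula[OF a n0]) (auto simp: dexq_def q_nn)
    also have "\<dots> = (\<Sum>j<n0. if q (x j) \<le> real (Mj \<alpha> n n0 j x) * \<alpha> / real n then 1 / real (Mj \<alpha> n n0 j x) else 0)"
      by (rule sum.cong) (auto simp: dexq_def Mj_def)
    finally show "real (card {i \<in> lsu_rej \<alpha> n (dexq q n0 x). i < n0}) /
      real (max (card (lsu_rej \<alpha> n (dexq q n0 x))) 1) =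
      (\<Sum>j<n0. if q (x j) \<le> real (Mj \<alpha> n n0 j x) * \<alpha> / real n then 1 / real (Mj \<alpha> n n0 j x) else 0)" .
  qed
  have [measurable]: "\<And>j. j \<in> {..<n0} \<Longrightarrow> (\<lambda>x. q (x j)) \<in> borel_measurable (PiM {..<n} (\<lambda>_. MX))"
    using n0 by (intro q_comp) auto
  have [measurable]: "\<And>j. (\<lambda>x. real (Mj \<alpha> n n0 j x)) \<in> borel_measurable (PiM {..<n} (\<lambda>_. MX))"
    using Mj_meas[OF n0] .
  show ?thesis unfolding eq by measurable
qed

end

lemma AE_dexq_eq:
  assumes MX: "prob_space MX" and N: "N \<in> null_sets MX" and eq: "\<And>x. x \<notin> N \<Longrightarrow> q0 x = q1 x"
    and n0: "n0 \<le> n"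
  shows "AE x in PiM {..<n} (\<lambda>_. MX). dexq q0 n0 x = dexq q1 n0 x"
proof -
  have "AE x in PiM {..<n} (\<lambda>_. MX). \<forall>l\<in>{..<n0}. x l \<notin> N"
  proof (rule eventually_ball_finite)
    show "finite {..<n0}" by simp
    show "\<forall>l\<in>{..<n0}. AE x in PiM {..<n} (\<lambda>_. MX). x l \<notin> N"
    proof
      fix l assume l: "l \<in> {..<n0}"
      show "AE x in PiM {..<n} (\<lambda>_. MX). x l \<notin> N"
        by (rule AE_PiM_component) (use MX l n0 AE_not_in[OF N] in auto)
    qed
  qed
  then show ?thesis by eventually_elim (auto simp: dexq_def fun_eq_iff eq)
qed

lemma integral_transfer:
  fixes f g :: "'a \<Rightarrow> real"
  assumes g: "g \<in> borel_measurable M" and ae: "AE x in M. f x = g x"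
  shows "\<bar>integral\<^sup>L M f\<bar> \<le> \<bar>integral\<^sup>L M g\<bar>"
proof (cases "integrable M f")
  case True
  then have "integral\<^sup>L M f = integral\<^sup>L M g"
    by (intro integral_cong_AE) (use g ae in auto)
  then show ?thesis by simp
next
  case False
  then show ?thesis by (simp add: not_integrable_integral_eq)
qed


lemma dex_eq: "dex_pvals WT g z = dexq (pval WT g z)"
  by (intro ext) (simp add: dex_pvals_def dexq_def)

definition EERg :: "real measure \<Rightarrow> (real \<Rightarrow> real) \<Rightarrow> real \<Rightarrow> nat \<Rightarrow> nat \<Rightarrow> real" where
  "EERg MX q \<alpha> n n0 = (\<integral>x. real (card {i \<in> lsu_rej \<alpha> n (dexq q n0 x). i < n0}) / real n
      \<partial>PiM {..<n} (\<lambda>_. MX))"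

definition FDRg :: "real measure \<Rightarrow> (real \<Rightarrow> real) \<Rightarrow> real \<Rightarrow> nat \<Rightarrow> nat \<Rightarrow> real" where
  "FDRg MX q \<alpha> n n0 = (\<integral>x. real (card {i \<in> lsu_rej \<alpha> n (dexq q n0 x). i < n0}) /
      real (max (card (lsu_rej \<alpha> n (dexq q n0 x))) 1) \<partial>PiM {..<n} (\<lambda>_. MX))"

lemma (in setting) EERg_eq: "EERg MX q \<alpha> n n0 = EERq \<alpha> n n0"
  unfolding EERg_def EERq_def ..

lemma (in setting) FDRg_eq: "FDRg MX q \<alpha> n n0 = FDRq \<alpha> n n0"
  unfolding FDRg_def FDRq_def ..

lemma EER_eq: "EER_n MX \<alpha> WT g z n m = EERg MX (pval WT g z) \<alpha> n m"
  unfolding EER_n_def EERg_def V_n_def dex_eq ..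

lemma FDR_eq: "FDR_n MX \<alpha> WT g z n m = FDRg MX (pval WT g z) \<alpha> n m"
  unfolding FDR_n_def FDRg_def V_n_def R_n_def dex_eq ..

theorem theorem2p3:
  fixes \<alpha> :: real and MX MZ :: "real measure" and g :: "real \<Rightarrow> real \<Rightarrow> real"
    and WT :: "real \<Rightarrow> real" and Xs Zs :: "real set" and n0 :: "nat \<Rightarrow> nat" and z :: real
  assumes alpha: "0 < \<alpha>" "\<alpha> < 1"
    and intervals: "is_interval Xs" "is_interval Zs"
    and MX: "real_distribution MX" "continuous_on UNIV (cdf MX)" "AE x in MX. x \<in> Xs"
    and MZ: "real_distribution MZ" "continuous_on UNIV (cdf MZ)" "AE y in MZ. y \<in> Zs"
    and g_cont: "continuous_on (Xs \<times> Zs) (\<lambda>(x, y). g x y)"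
    and g_mono1: "\<forall>y\<in>Zs. strict_mono_on Xs (\<lambda>x. g x y)"
    and g_mono2: "(\<forall>x\<in>Xs. strict_mono_on Zs (g x)) \<or> (\<forall>x\<in>Xs. strict_antimono_on Zs (g x))
                  \<or> (\<forall>x\<in>Xs. \<forall>y1\<in>Zs. \<forall>y2\<in>Zs. g x y1 = g x y2)"
    and WT: "\<forall>t. WT t = measure (MX \<Otimes>\<^sub>M MZ) {(x, y) \<in> space (MX \<Otimes>\<^sub>M MZ). g x y \<le> t}"
    and z: "z \<in> Zs"
    and n0: "\<forall>n. n0 n \<le> n" "(\<lambda>n. real (n0 n) / real n) \<longlonglongrightarrow> 1"
    and F_cont: "continuous_on {0..1} (Finf MX WT g z)"
    and F_0: "Finf MX WT g z 0 = 0"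
    and F_rdiff: "Finf MX WT g z differentiable (at 0 within {0..})"
    and F_below: "\<forall>t\<in>{0<..\<alpha>}. Finf MX WT g z t < t / \<alpha>"
  shows "(\<lambda>n. EER_n MX \<alpha> WT g z n (n0 n)) \<longlonglongrightarrow> 0
         \<and> (\<lambda>n. FDR_n MX \<alpha> WT g z n (n0 n)) \<longlonglongrightarrow>
           \<alpha> * Lim (at_right 0) (\<lambda>t. Finf MX WT g z t / t)"
proof -
  define q0 where "q0 = pval WT g z"
  define Fi where "Fi = Finf MX WT g z"
  interpret MXp: real_distribution MX by (rule MX(1))
  interpret MZp: real_distribution MZ by (rule MZ(1))
  interpret PP: prob_space "MX \<Otimes>\<^sub>M MZ" by (rule prob_space_pair) unfold_locales
  have q01: "0 \<le> q0 x" "q0 x \<le> 1" for x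
  proof -
    have "WT (g x z) \<le> 1" "WT (g x z) \<ge> 0" using WT by auto
    then show "0 \<le> q0 x" "q0 x \<le> 1" unfolding q0_def pval_def by auto
  qed
  define P where "P t = {x \<in> space MX. q0 x \<le> t}" for t
  have Fi_eq: "Fi t = measure MX (P t)" for t unfolding Fi_def Finf_def P_def q0_def ..
  obtain d where hd: "(Fi has_real_derivative d) (at 0 within {0..})"
    using F_rdiff unfolding Fi_def by (rule real_differentiableE)
  have gl: "((\<lambda>t. Fi t / t) \<longlongrightarrow> d) (at_right 0)"
  proof -
    have "((\<lambda>y. (Fi y - Fi 0) / (y - 0)) \<longlongrightarrow> d) (at 0 within {0..})"
      using hd by (simp add: has_field_derivative_iff)
    then have "((\<lambda>y. Fi y / y) \<longlongrightarrow> d) (at 0 within {0..})"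
      using F_0 unfolding Fi_def by simp
    then show ?thesis by (rule tendsto_within_subset) auto
  qed
  have Lim_eq: "Lim (at_right 0) (\<lambda>t. Finf MX WT g z t / t) = d"
    using gl unfolding Fi_def by (intro tendsto_Lim) auto
  have EEReq: "\<And>n. EER_n MX \<alpha> WT g z n (n0 n) = EERg MX q0 \<alpha> n (n0 n)"
    unfolding q0_def by (rule EER_eq)
  have FDReq: "\<And>n. FDR_n MX \<alpha> WT g z n (n0 n) = FDRg MX q0 \<alpha> n (n0 n)"
    unfolding q0_def by (rule FDR_eq)
  show ?thesis
  proof (cases "\<forall>t. P t \<in> sets MX")
    case True
    have qm: "q0 \<in> borel_measurable MX"
      using True unfolding borel_measurable_iff_le P_def by blast
    interpret S: setting MX q0 by unfold_locales (use qm q01 in auto)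
    have SF: "S.F = Fi" by (intro ext) (simp add: S.F_def Fi_eq P_def)
    have E: "(\<lambda>n. S.EERq \<alpha> n (n0 n)) \<longlonglongrightarrow> 0"
      by (rule S.EER_lim[OF alpha _ _ n0]) (use F_cont F_below in \<open>simp_all add: SF Fi_def\<close>)
    have D: "(\<lambda>n. S.FDRq \<alpha> n (n0 n)) \<longlonglongrightarrow> \<alpha> * d"
      by (rule S.FDR_lim[OF alpha _ _ n0]) (use F_cont F_below gl in \<open>simp_all add: SF Fi_def\<close>)
    show ?thesis using E D unfolding EEReq FDReq Lim_eq S.EERg_eq S.FDRg_eq by simp
  next
    case False
    then obtain t0 where t0: "P t0 \<notin> sets MX" by blast
    have Pmono: "P s \<subseteq> P t" if "s \<le> t" for s t unfolding P_def using that by auto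
    have Pspace: "P t = space MX" if "t \<ge> 1" for t
    proof -
      have "q0 x \<le> t" for x using q01(2)[of x] that by linarith
      then show ?thesis unfolding P_def by auto
    qed
    have Pempty: "P t = {}" if "t < 0" for t
    proof -
      have "\<not> q0 x \<le> t" for x using q01(1)[of x] that by linarith
      then show ?thesis unfolding P_def by auto
    qed
    define Z where "Z = {t \<in> {0..1}. Fi t = 0}"
    define u where "u = Sup Z"
    have Zc: "closed Z"
    proof -
      have "Z = {0..1} \<inter> Fi -` {0}" unfolding Z_def by auto
      then show ?thesis using continuous_closed_preimage[OF F_cont[folded Fi_def] closed_atLeastAtMost closed_singleton] by simp
    qed
    have Z0: "0 \<in> Z" unfolding Z_def using F_0 unfolding Fi_def by simp
    have Zb: "bdd_above Z" unfolding Z_def by (rule bdd_aboveI[of _ 1]) auto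
    have uZ: "u \<in> Z" unfolding u_def using closed_contains_Sup[OF _ Zb Zc] Z0 by blast
    have u01: "0 \<le> u" "u \<le> 1" and Fu: "Fi u = 0" using uZ unfolding Z_def by auto
    have above: "P t \<in> sets MX" if "t > u" for t
    proof (cases "t \<ge> 1")
      case True then show ?thesis using Pspace by simp
    next
      case False
      show ?thesis
      proof (rule ccontr)
        assume "P t \<notin> sets MX"
        then have "Fi t = 0" using Fi_eq measure_notin_sets by metis
        then have "t \<in> Z" unfolding Z_def using False that u01 by auto
        then have "t \<le> u" unfolding u_def by (rule cSup_upper[OF _ Zb])
        then show False using that by simp
      qed
    qed
    have Pu_eq: "P u = (\<Inter>k. P (u + 1 / real (Suc k)))"
    proof
      show "P u \<subseteq> (\<Inter>k. P (u + 1 / real (Suc k)))"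
      proof (rule INT_greatest)
        fix k show "P u \<subseteq> P (u + 1 / real (Suc k))" by (rule Pmono) simp
      qed
      show "(\<Inter>k. P (u + 1 / real (Suc k))) \<subseteq> P u"
      proof
        fix x assume x: "x \<in> (\<Inter>k. P (u + 1 / real (Suc k)))"
        show "x \<in> P u"
        proof (rule ccontr)
          assume "x \<notin> P u"
          then have gt: "q0 x - u > 0" using x unfolding P_def by auto
          obtain k where k: "k > 0" "inverse (real k) < q0 x - u" using ex_inverse_of_nat_less[OF gt] by blast
          have "1 / real (Suc k) \<le> inverse (real k)" using k(1) by (simp add: inverse_eq_divide frac_le)
          moreover have "q0 x \<le> u + 1 / real (Suc k)" using x unfolding P_def by auto
          ultimately show False using k(2) by linarith
        qed
      qed
    qed
    have Pu: "P u \<in> sets MX" unfolding Pu_eq using above by (intro sets.countable_INT) auto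
    have Pu0: "measure MX (P u) = 0" using Fu Fi_eq by simp
    have upos: "u > 0"
    proof (rule ccontr)
      assume "\<not> u > 0"
      then have u0: "u = 0" using u01 by simp
      have "t0 \<ge> 0"
      proof (rule ccontr)
        assume "\<not> t0 \<ge> 0"
        then have "P t0 = {}" by (intro Pempty) simp
        then show False using t0 by simp
      qed
      moreover have "t0 \<le> u"
      proof (rule ccontr)
        assume "\<not> t0 \<le> u"
        then have "P t0 \<in> sets MX" by (intro above) simp
        then show False using t0 by simp
      qed
      ultimately show False using t0 Pu u0 by simp
    qed
    have Fi0: "Fi t = 0" if "t \<le> u" for t
    proof (cases "P t \<in> sets MX")
      case True
      have "measure MX (P t) \<le> measure MX (P u)"
        by (rule MXp.finite_measure_mono[OF Pmono[OF that] Pu])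
      then show ?thesis using Pu0 Fi_eq[of t] by (simp add: measure_nonneg antisym)
    next
      case False then show ?thesis using Fi_eq[of t] measure_notin_sets[OF False] by simp
    qed
    have d0: "d = 0"
    proof -
      have "eventually (\<lambda>t. t \<in> {0<..<u}) (at_right 0)" by (rule eventually_at_right_real[OF upos])
      then have "eventually (\<lambda>t. 0 = Fi t / t) (at_right 0)"
        by (rule eventually_mono) (use Fi0 in auto)
      then have "((\<lambda>t. Fi t / t) \<longlongrightarrow> 0) (at_right 0)"
        by (rule Lim_transform_eventually[OF tendsto_const])
      moreover have nb: "at_right (0::real) \<noteq> bot" by simp
      ultimately show ?thesis using tendsto_unique[OF nb gl] by blast
    qed
    define N where "N = P u"
    define q1 where "q1 x = (if x \<in> N then 1 else q0 x)" for x
    have q1_01: "0 \<le> q1 x" "q1 x \<le> 1" for x unfolding q1_def using q01 by auto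
    have q1set: "{x \<in> space MX. q1 x \<le> t} = (if t \<ge> 1 then space MX else if t > u then P t - N else {})" for t
    proof (cases "t \<ge> 1")
      case True
      have "q1 x \<le> t" for x using q1_01(2)[of x] True by linarith
      then show ?thesis using True by auto
    next
      case False
      show ?thesis
      proof (cases "t > u")
        case True
        have "q1 x \<le> t \<longleftrightarrow> x \<in> P t - N" for x
          unfolding q1_def N_def P_def using False by auto
        then show ?thesis using False True by auto
      next
        case Fu2: False
        have "\<not> q1 x \<le> t" for x
        proof (cases "x \<in> N")
          case True then show ?thesis unfolding q1_def using False by simp
        next
          case Fn: False
          then have "q0 x > u" unfolding N_def P_def by auto
          then show ?thesis unfolding q1_def using Fu2 Fn by simp
        qed
        then show ?thesis using False Fu2 by auto
      qed
    qed
    have q1m: "q1 \<in> borel_measurable MX"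
      unfolding borel_measurable_iff_le q1set N_def using above Pu by auto
    interpret S: setting MX q1 by unfold_locales (use q1m q1_01 in auto)
    have SF: "S.F = Fi"
    proof (rule ext)
      fix t
      show "S.F t = Fi t"
      proof (cases "t \<ge> 1")
        case True then show ?thesis unfolding S.F_def q1set Fi_eq using Pspace[OF True] by simp
      next
        case False
        show ?thesis
        proof (cases "t > u")
          case True
          have "measure MX (P t - N) = measure MX (P t) - measure MX N"
            unfolding N_def by (rule MXp.finite_measure_Diff[OF above[OF True] Pu Pmono]) (use True in simp)
          then show ?thesis unfolding S.F_def q1set Fi_eq using True False Pu0 N_def by simp
        next
          case False': False
          then show ?thesis unfolding S.F_def q1set using False Fi0[of t] by simp
        qed
      qed
    qed
    have E: "(\<lambda>n. S.EERq \<alpha> n (n0 n)) \<longlonglongrightarrow> 0"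
      by (rule S.EER_lim[OF alpha _ _ n0]) (use F_cont F_below in \<open>simp_all add: SF Fi_def\<close>)
    have D: "(\<lambda>n. S.FDRq \<alpha> n (n0 n)) \<longlonglongrightarrow> \<alpha> * d"
      by (rule S.FDR_lim[OF alpha _ _ n0]) (use F_cont F_below gl in \<open>simp_all add: SF Fi_def\<close>)
    have Nnull: "N \<in> null_sets MX" unfolding N_def using Pu Pu0 by (simp add: MXp.emeasure_eq_measure null_setsI)
    have eqN: "\<And>x. x \<notin> N \<Longrightarrow> q0 x = q1 x" unfolding q1_def by simp
    have cmpE: "norm (EERg MX q0 \<alpha> n (n0 n)) \<le> \<bar>S.EERq \<alpha> n (n0 n)\<bar>" for n
    proof -
      have "AE x in PiM {..<n} (\<lambda>_. MX). dexq q0 (n0 n) x = dexq q1 (n0 n) x"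
        by (rule AE_dexq_eq[OF MXp.prob_space_axioms Nnull eqN]) (use n0 in auto)
      then have ae: "AE x in PiM {..<n} (\<lambda>_. MX).
          real (card {i \<in> lsu_rej \<alpha> n (dexq q0 (n0 n) x). i < n0 n}) / real n =
          real (card {i \<in> lsu_rej \<alpha> n (dexq q1 (n0 n) x). i < n0 n}) / real n"
        by eventually_elim simp
      have "\<bar>EERg MX q0 \<alpha> n (n0 n)\<bar> \<le> \<bar>EERg MX q1 \<alpha> n (n0 n)\<bar>"
        unfolding EERg_def by (rule integral_transfer[OF S.EER_integrand_meas ae]) (use alpha n0 in auto)
      then show ?thesis using S.EERg_eq by simp
    qed
    have cmpD: "norm (FDRg MX q0 \<alpha> n (n0 n)) \<le> \<bar>S.FDRq \<alpha> n (n0 n)\<bar>" for n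
    proof -
      have "AE x in PiM {..<n} (\<lambda>_. MX). dexq q0 (n0 n) x = dexq q1 (n0 n) x"
        by (rule AE_dexq_eq[OF MXp.prob_space_axioms Nnull eqN]) (use n0 in auto)
      then have ae: "AE x in PiM {..<n} (\<lambda>_. MX).
          real (card {i \<in> lsu_rej \<alpha> n (dexq q0 (n0 n) x). i < n0 n}) /
            real (max (card (lsu_rej \<alpha> n (dexq q0 (n0 n) x))) 1) =
          real (card {i \<in> lsu_rej \<alpha> n (dexq q1 (n0 n) x). i < n0 n}) /
            real (max (card (lsu_rej \<alpha> n (dexq q1 (n0 n) x))) 1)"
        by eventually_elim simp
      have "\<bar>FDRg MX q0 \<alpha> n (n0 n)\<bar> \<le> \<bar>FDRg MX q1 \<alpha> n (n0 n)\<bar>"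
        unfolding FDRg_def by (rule integral_transfer[OF S.FDR_integrand_meas ae]) (use alpha n0 in auto)
      then show ?thesis using S.FDRg_eq by simp
    qed
    have E2: "(\<lambda>n. EERg MX q0 \<alpha> n (n0 n)) \<longlonglongrightarrow> 0"
      by (rule Lim_null_comparison[OF always_eventually[OF allI[OF cmpE]]]) (rule tendsto_rabs_zero[OF E])
    have D': "(\<lambda>n. S.FDRq \<alpha> n (n0 n)) \<longlonglongrightarrow> 0" using D d0 by simp
    have D2: "(\<lambda>n. FDRg MX q0 \<alpha> n (n0 n)) \<longlonglongrightarrow> 0"
      by (rule Lim_null_comparison[OF always_eventually[OF allI[OF cmpD]]]) (rule tendsto_rabs_zero[OF D'])
    show ?thesis using E2 D2 unfolding EEReq FDReq Lim_eq d0 by simp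
  qed
qed


end
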